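(* Let $q\ge0$, $f\in L^2((0,T);\dot H^1)$, $u_0\in H$, and $\mathscr{F}(X)=\int_0^T\langle f(s),X(s)\rangle\,\mathrm{d}s+(u_0,X(0))$. Then for all $X\in\mathcal{X}_{k,q+1}$, \[ |\mathscr{F}(X)|\le\Big[\sum_{i=0}^{N-1}\Big(\int_{I_i}\|f(s)\|_{\dot H^{-1}}^2\,\mathrm{d}s+k_i^2\int_{I_i}\|f(s)\|_{\dot H^1}^2\,\mathrm{d}s\Big)+\|u_0\|_H^2\Big]^{\frac12}|X|_{\mathcal{X}_{k,q+1}} . \]
   Context: Let $V\hookrightarrow H\hookrightarrow V^*$ be a Gelfand triple of real separable Hilbert spaces, with $V$ densely embedded in $H$. Write $(\cdot,\cdot)$ for the inner product of $H$ and $\langle\cdot,\cdot\rangle$ for the duality. Let $A:V\to V^*$ be the operator associated with a symmetric, bounded, coercive bilinear form on $V$. For $\gamma\in\mathbb{R}$, $\dot H^\gamma=D(A^{\gamma/2})$ with norm $\|A^{\gamma/2}\cdot\|_H$, so $\dot H^1=V$ and $\dot H^{-1}=V^*$. Let $0=t_0<\dots<t_N=T$, $I_i=[t_i,t_{i+1}]$ and $k_i=t_{i+1}-t_i$. Let $\mathcal{X}_{k,q+1}$ be the set of $X\in L^2((0,T);V)\cap H^1((0,T);V^* )$ whose restriction to each $I_i$ is a polynomial in $t$ of degree $\le q+1$ with coefficients in $\dot H^1$. It carries the norm \[ |X|_{\mathcal{X}_{k,q+1}}^2=\|X(0)\|_H^2+\sum_{i}\int_{I_i}\big(\|\dot X\|_{\dot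 H^{-1}}^2+\|\Pi_i^{(q)}X\|_{\dot H^1}^2\big)\,\mathrm{d}s , \] where $\Pi_i^{(q)}$ is the $L^2(I_i)$-orthogonal projection onto polynomials in $t$ of degree $\le q$. *)

theory Defs
  imports "HOL-Analysis.Analysis"
begin

text \<open>Gelfand triple V \<subseteq> H \<subseteq> V*, H a real separable Hilbert space (the type 'h),
  V a dense subspace of H carrying a symmetric bilinear form a which is an inner product
  making V a Hilbert space continuously embedded in H.  The norm of Hdot^1 is the energy
  norm sqrt(a v v) = norm of A^(1/2) v.\<close>

definition gelfand_setup :: "'h::{real_inner,banach,second_countable_topology} set \<Rightarrow> ('h \<Rightarrow> 'h \<Rightarrow> real) \<Rightarrow> bool" where
  "gelfand_setup V a \<longleftrightarrow>
     subspace V \<and> closure V = UNIV \<and>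
     (\<forall>x\<in>V. \<forall>y\<in>V. a x y = a y x) \<and>
     (\<forall>x\<in>V. \<forall>y\<in>V. \<forall>z\<in>V. a (x + y) z = a x z + a y z) \<and>
     (\<forall>x\<in>V. \<forall>z\<in>V. \<forall>c::real. a (c *\<^sub>R x) z = c * a x z) \<and>
     (\<exists>C>0. \<forall>v\<in>V. (norm v)\<^sup>2 \<le> C * a v v) \<and>
     (\<forall>u::nat \<Rightarrow> 'h. (\<forall>n. u n \<in> V) \<longrightarrow>
        (\<forall>e>0. \<exists>M. \<forall>m\<ge>M. \<forall>n\<ge>M. a (u m - u n) (u m - u n) < e) \<longrightarrow>
        (\<exists>w\<in>V. \<forall>e>0. \<exists>M. \<forall>n\<ge>M. a (u n - w) (u n - w) < e))"

definition h1norm :: "('h \<Rightarrow> 'h \<Rightarrow> real) \<Rightarrow> 'h \<Rightarrow> real" where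
  "h1norm a v = sqrt (a v v)"

definition hm1norm :: "'h::real_inner set \<Rightarrow> ('h \<Rightarrow> 'h \<Rightarrow> real) \<Rightarrow> 'h \<Rightarrow> real" where
  "hm1norm V a g = Sup (insert 0 ((\<lambda>v. \<bar>inner g v\<bar> / h1norm a v) ` (V - {0})))"

definition partition :: "(nat \<Rightarrow> real) \<Rightarrow> nat \<Rightarrow> real \<Rightarrow> bool" where
  "partition t N T \<longleftrightarrow> t 0 = 0 \<and> t N = T \<and> (\<forall>i<N. t i < t (Suc i))"

text \<open>The space X_{k,q+1}: on each I_i = [t_i, t_{i+1}], X is a polynomial in time of degree
  at most q+1 with coefficients in V (continuity at the nodes is forced since the
  closed intervals overlap there).\<close>
definition in_Xk :: "'h::real_vector set \<Rightarrow> (nat \<Rightarrow> real) \<Rightarrow> nat \<Rightarrow> nat \<Rightarrow> (real \<Rightarrow> 'h) \<Rightarrow> bool" where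
  "in_Xk V t N q X \<longleftrightarrow>
     (\<exists>c::nat \<Rightarrow> nat \<Rightarrow> 'h. (\<forall>i<N. \<forall>j. c i j \<in> V) \<and>
        (\<forall>i<N. \<forall>s\<in>{t i..t (Suc i)}. X s = (\<Sum>j\<le>q+1. s ^ j *\<^sub>R c i j)))"

definition poly_proj :: "nat \<Rightarrow> real \<Rightarrow> real \<Rightarrow> (real \<Rightarrow> 'h::{real_inner,banach,second_countable_topology}) \<Rightarrow> (real \<Rightarrow> 'h)" where
  "poly_proj q lo hi X = (THE P. (\<exists>d::nat \<Rightarrow> 'h. P = (\<lambda>s. \<Sum>j\<le>q. s ^ j *\<^sub>R d j)) \<and>
       (\<forall>m\<le>q. (LINT s:{lo..hi}|lborel. s ^ m *\<^sub>R (X s - P s)) = 0))"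

definition Xk_norm2 :: "'h::{real_inner,banach,second_countable_topology} set \<Rightarrow> ('h \<Rightarrow> 'h \<Rightarrow> real) \<Rightarrow> (nat \<Rightarrow> real) \<Rightarrow> nat \<Rightarrow> nat \<Rightarrow> (real \<Rightarrow> 'h) \<Rightarrow> real" where
  "Xk_norm2 V a t N q X = (norm (X 0))\<^sup>2 +
     (\<Sum>i<N. LINT s:{t i..t (Suc i)}|lborel.
        (hm1norm V a (vector_derivative X (at s)))\<^sup>2 + (h1norm a (poly_proj q (t i) (t (Suc i)) X s))\<^sup>2)"

end

theory Submission
  imports Defs
begin
lemma CS_real:
  fixes u v :: "'a \<Rightarrow> real"
  assumes u: "u \<in> borel_measurable M" and v: "v \<in> borel_measurable M"
    and iu: "integrable M (\<lambda>x. (u x)^2)" and iv: "integrable M (\<lambda>x. (v x)^2)"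
  shows "integrable M (\<lambda>x. u x * v x)"
    and "(\<integral>x. \<bar>u x * v x\<bar> \<partial>M) \<le> sqrt (\<integral>x. (u x)^2 \<partial>M) * sqrt (\<integral>x. (v x)^2 \<partial>M)"
proof -
  have ip: "integrable M (\<lambda>x. (u x)^2 + (v x)^2)" using iu iv by auto
  have pt: "\<bar>u x * v x\<bar> \<le> (u x)^2 + (v x)^2" for x
  proof -
    have "0 \<le> (\<bar>u x\<bar> - \<bar>v x\<bar>)^2" by simp
    hence "2 * (\<bar>u x\<bar> * \<bar>v x\<bar>) \<le> (u x)^2 + (v x)^2"
      by (simp add: power2_eq_square algebra_simps)
    moreover have "0 \<le> \<bar>u x\<bar> * \<bar>v x\<bar>" by simp
    ultimately show ?thesis unfolding abs_mult by linarith
  qed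
  show iuv: "integrable M (\<lambda>x. u x * v x)"
    by (rule Bochner_Integration.integrable_bound[OF ip]) (use u v pt in auto)
  have iabs: "integrable M (\<lambda>x. \<bar>u x * v x\<bar>)" using iuv by auto
  define A where "A = (\<integral>x. (u x)^2 \<partial>M)"
  define C where "C = (\<integral>x. (v x)^2 \<partial>M)"
  define B where "B = (\<integral>x. \<bar>u x * v x\<bar> \<partial>M)"
  have A0: "A \<ge> 0" unfolding A_def by simp
  have C0: "C \<ge> 0" unfolding C_def by simp
  have B0: "B \<ge> 0" unfolding B_def by simp
  have key: "2 * t * B \<le> t^2 * A + C" if t: "t > 0" for t
  proof -
    have "\<And>x. 2 * t * \<bar>u x * v x\<bar> \<le> t^2 * (u x)^2 + (v x)^2"
    proof -
      fix x
      have "0 \<le> (t * \<bar>u x\<bar> - \<bar>v x\<bar>)^2" by simp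
      thus "2 * t * \<bar>u x * v x\<bar> \<le> t^2 * (u x)^2 + (v x)^2"
        using t by (simp add: power2_eq_square algebra_simps abs_mult)
    qed
    hence "(\<integral>x. 2 * t * \<bar>u x * v x\<bar> \<partial>M) \<le> (\<integral>x. t^2 * (u x)^2 + (v x)^2 \<partial>M)"
      by (intro integral_mono) (use iabs iu iv in auto)
    thus ?thesis unfolding A_def B_def C_def using iu iv by simp
  qed
  show "B \<le> sqrt A * sqrt C" unfolding B_def[symmetric] A_def[symmetric] C_def[symmetric]
  proof (cases "A > 0 \<and> C > 0")
    case True
    define t where "t = sqrt C / sqrt A"
    have tp: "t > 0" using True unfolding t_def by simp
    have "t^2 * A = C" unfolding t_def using True by (simp add: power_divide)
    moreover have "2 * t * sqrt A * sqrt C = 2 * C" unfolding t_def using True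
      by (simp add: real_sqrt_mult[symmetric])
    ultimately have "2 * t * B \<le> 2 * t * (sqrt A * sqrt C)" using key[OF tp] by (simp add: mult.assoc)
    thus ?thesis using tp by simp
  next
    case False
    show ?thesis
    proof (rule ccontr)
      assume "\<not> B \<le> sqrt A * sqrt C"
      hence Bp: "B > 0" using False A0 C0 by auto
      show False
      proof (cases "A = 0")
        case True
        define t where "t = (C + 1) / B"
        have tp: "t > 0" using Bp C0 unfolding t_def by simp
        have "2 * t * B = 2 * (C + 1)" unfolding t_def using Bp by simp
        thus False using key[OF tp] True C0 by simp
      next
        case False2: False
        hence C00: "C = 0" using False A0 C0 by auto
        define t where "t = B / (A + 1)"
        have tp: "t > 0" using Bp A0 unfolding t_def by simp
        have "t^2 * A < 2 * t * B"
        proof -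
          have "A / (A + 1) < 1" using A0 by simp
          hence "B * (A / (A + 1)) < B * 1" using Bp by (intro mult_strict_left_mono)
          moreover have "t * A = B * (A / (A + 1))" unfolding t_def by simp
          ultimately have "t * A < 2 * B" using Bp by simp
          thus ?thesis using tp by (simp add: power2_eq_square mult.assoc)
        qed
        thus False using key[OF tp] C00 by simp
      qed
    qed
  qed
qed

context
  fixes V :: "'h::{real_inner,banach,second_countable_topology} set" and a :: "'h \<Rightarrow> 'h \<Rightarrow> real"
  assumes gs: "gelfand_setup V a"
begin

lemma gs_sub: "subspace V" using gs unfolding gelfand_setup_def by blast
lemma gs_sym: "x \<in> V \<Longrightarrow> y \<in> V \<Longrightarrow> a x y = a y x" using gs unfolding gelfand_setup_def by blast
lemma gs_add: "x \<in> V \<Longrightarrow> y \<in> V \<Longrightarrow> z \<in> V \<Longrightarrow> a (x + y) z = a x z + a y z"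
  using gs unfolding gelfand_setup_def by blast
lemma gs_scale: "x \<in> V \<Longrightarrow> z \<in> V \<Longrightarrow> a (c *\<^sub>R x) z = c * a x z"
  using gs unfolding gelfand_setup_def by blast
lemma gs_C: obtains C where "C > 0" "\<And>v. v \<in> V \<Longrightarrow> (norm v)\<^sup>2 \<le> C * a v v"
  using gs unfolding gelfand_setup_def by blast

lemma gs_zero_left: "z \<in> V \<Longrightarrow> a 0 z = 0"
  using gs_scale[of 0 z 0] gs_sub by (simp add: subspace_0)

lemma a_nonneg: "v \<in> V \<Longrightarrow> a v v \<ge> 0"
proof -
  assume v: "v \<in> V"
  obtain C where C: "C > 0" "\<And>v. v \<in> V \<Longrightarrow> (norm v)\<^sup>2 \<le> C * a v v" using gs_C by blast
  have "0 \<le> C * a v v" using C(2)[OF v] zero_le_power2[of "norm v"] by linarith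
  thus ?thesis using C(1) by (simp add: zero_le_mult_iff)
qed

lemma a_pos: "v \<in> V \<Longrightarrow> v \<noteq> 0 \<Longrightarrow> a v v > 0"
proof -
  assume v: "v \<in> V" "v \<noteq> 0"
  obtain C where C: "C > 0" "\<And>v. v \<in> V \<Longrightarrow> (norm v)\<^sup>2 \<le> C * a v v" using gs_C by blast
  have "0 < (norm v)^2" using v(2) by simp
  hence "0 < C * a v v" using C(2)[OF v(1)] by linarith
  thus ?thesis using C(1) by (simp add: zero_less_mult_iff)
qed

lemma h1_pos: "v \<in> V \<Longrightarrow> v \<noteq> 0 \<Longrightarrow> h1norm a v > 0"
  unfolding h1norm_def using a_pos by simp

lemma h1_sq: "v \<in> V \<Longrightarrow> (h1norm a v)\<^sup>2 = a v v"
  unfolding h1norm_def using a_nonneg by simp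

lemma gs_Cs: obtains K where "K > 0" "\<And>v. v \<in> V \<Longrightarrow> norm v \<le> K * h1norm a v"
proof -
  obtain C where C: "C > 0" "\<And>v. v \<in> V \<Longrightarrow> (norm v)\<^sup>2 \<le> C * a v v" using gs_C by blast
  have "norm v \<le> sqrt C * h1norm a v" if v: "v \<in> V" for v
  proof -
    have "norm v = sqrt ((norm v)\<^sup>2)" by simp
    also have "\<dots> \<le> sqrt (C * a v v)" using C(2)[OF v] by (rule real_sqrt_le_mono)
    also have "\<dots> = sqrt C * h1norm a v" unfolding h1norm_def by (simp add: real_sqrt_mult)
    finally show ?thesis .
  qed
  thus ?thesis using that[of "sqrt C"] C(1) by simp
qed

lemma hm1_bdd: "bdd_above (insert 0 ((\<lambda>v. \<bar>inner g v\<bar> / h1norm a v) ` (V - {0})))"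
proof -
  obtain K where K: "K > 0" "\<And>v. v \<in> V \<Longrightarrow> norm v \<le> K * h1norm a v" using gs_Cs by blast
  have "\<bar>inner g v\<bar> / h1norm a v \<le> norm g * K" if v: "v \<in> V" "v \<noteq> 0" for v
  proof -
    have hp: "h1norm a v > 0" using h1_pos v by simp
    have "\<bar>inner g v\<bar> \<le> norm g * norm v" by (rule Cauchy_Schwarz_ineq2)
    also have "\<dots> \<le> norm g * (K * h1norm a v)" using K(2)[OF v(1)] by (simp add: mult_left_mono)
    finally show ?thesis using hp by (simp add: divide_le_eq mult.assoc)
  qed
  thus ?thesis unfolding bdd_above_def
    by (intro exI[of _ "norm g * K"]) (use K(1) in auto)
qed

lemma hm1_nonneg: "hm1norm V a g \<ge> 0"
  unfolding hm1norm_def by (rule cSup_upper[OF insertI1 hm1_bdd])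

lemma hm1_ge: "v \<in> V \<Longrightarrow> v \<noteq> 0 \<Longrightarrow> \<bar>inner g v\<bar> / h1norm a v \<le> hm1norm V a g"
  unfolding hm1norm_def by (rule cSup_upper[OF _ hm1_bdd]) auto

lemma hm1_pair: "v \<in> V \<Longrightarrow> \<bar>inner g v\<bar> \<le> hm1norm V a g * h1norm a v"
proof (cases "v = 0")
  case False
  assume v: "v \<in> V"
  have "h1norm a v > 0" using h1_pos v False by simp
  thus ?thesis using hm1_ge[OF v False, of g] by (simp add: divide_le_eq)
qed (simp add: h1norm_def gs_zero_left)

lemma hm1_le: "M \<ge> 0 \<Longrightarrow> (\<And>v. v \<in> V \<Longrightarrow> v \<noteq> 0 \<Longrightarrow> \<bar>inner g v\<bar> / h1norm a v \<le> M) \<Longrightarrow> hm1norm V a g \<le> M"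
  unfolding hm1norm_def by (rule cSup_least) auto

lemma hm1_le_norm: obtains K where "K > 0" "\<And>g. hm1norm V a g \<le> K * norm g"
proof -
  obtain K where K: "K > 0" "\<And>v. v \<in> V \<Longrightarrow> norm v \<le> K * h1norm a v" using gs_Cs by blast
  have "hm1norm V a g \<le> K * norm g" for g
  proof (rule hm1_le)
    show "0 \<le> K * norm g" using K(1) by simp
    fix v assume v: "v \<in> V" "v \<noteq> 0"
    have hp: "h1norm a v > 0" using h1_pos v by simp
    have "\<bar>inner g v\<bar> \<le> norm g * norm v" by (rule Cauchy_Schwarz_ineq2)
    also have "\<dots> \<le> norm g * (K * h1norm a v)" using K(2)[OF v(1)] by (simp add: mult_left_mono)
    finally show "\<bar>inner g v\<bar> / h1norm a v \<le> K * norm g" using hp by (simp add: divide_le_eq mult_ac)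
  qed
  thus ?thesis using that K(1) by blast
qed

lemma hm1_triangle: "hm1norm V a (g + g') \<le> hm1norm V a g + hm1norm V a g'"
proof (rule hm1_le)
  show "0 \<le> hm1norm V a g + hm1norm V a g'" using hm1_nonneg by (simp add: add_nonneg_nonneg)
  fix v assume v: "v \<in> V" "v \<noteq> 0"
  have hp: "h1norm a v > 0" using h1_pos v by simp
  have "\<bar>inner (g + g') v\<bar> \<le> \<bar>inner g v\<bar> + \<bar>inner g' v\<bar>" by (simp add: inner_add_left)
  also have "\<dots> \<le> hm1norm V a g * h1norm a v + hm1norm V a g' * h1norm a v"
    using hm1_pair[OF v(1)] by (simp add: add_mono)
  finally show "\<bar>inner (g + g') v\<bar> / h1norm a v \<le> hm1norm V a g + hm1norm V a g'"
    using hp by (simp add: divide_le_eq distrib_right)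
qed

lemma hm1_cont: "continuous_on UNIV (hm1norm V a)"
proof -
  obtain K where K: "K > 0" "\<And>g. hm1norm V a g \<le> K * norm g" using hm1_le_norm by blast
  have "dist (hm1norm V a x) (hm1norm V a y) \<le> K * dist x y" for x y
  proof -
    have 1: "hm1norm V a x \<le> hm1norm V a y + K * norm (x - y)"
      using hm1_triangle[of y "x - y"] K(2)[of "x - y"] by simp
    have 2: "hm1norm V a y \<le> hm1norm V a x + K * norm (x - y)"
      using hm1_triangle[of x "y - x"] K(2)[of "y - x"] by (simp add: norm_minus_commute)
    show ?thesis using 1 2 by (simp add: dist_real_def dist_norm)
  qed
  hence "K-lipschitz_on UNIV (hm1norm V a)" by (intro lipschitz_onI) (use K in auto)
  thus ?thesis by (rule lipschitz_on_continuous_on)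
qed

lemma hm1_meas: "hm1norm V a \<in> borel_measurable borel"
  by (rule borel_measurable_continuous_onI[OF hm1_cont])

lemma a_sum_left:
  assumes "finite S" "\<And>j. j \<in> S \<Longrightarrow> x j \<in> V" "z \<in> V"
  shows "a (\<Sum>j\<in>S. c j *\<^sub>R x j) z = (\<Sum>j\<in>S. c j * a (x j) z)"
  using assms
proof (induction S rule: finite_induct)
  case empty thus ?case using gs_zero_left by simp
next
  case (insert j S)
  have xs: "(\<Sum>j\<in>S. c j *\<^sub>R x j) \<in> V"
    using insert.prems gs_sub by (intro subspace_sum subspace_scale) auto
  have xj: "c j *\<^sub>R x j \<in> V" using insert.prems gs_sub by (intro subspace_scale) auto
  show ?case using insert gs_add[OF xj xs insert.prems(2)] gs_scale[of "x j" z "c j"] by simp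
qed

lemma a_sum_both:
  assumes "finite S" "\<And>j. j \<in> S \<Longrightarrow> x j \<in> V"
  shows "a (\<Sum>j\<in>S. c j *\<^sub>R x j) (\<Sum>j\<in>S. c j *\<^sub>R x j) = (\<Sum>j\<in>S. \<Sum>l\<in>S. c j * c l * a (x j) (x l))"
proof -
  have xs: "(\<Sum>j\<in>S. c j *\<^sub>R x j) \<in> V"
    using assms gs_sub by (intro subspace_sum subspace_scale) auto
  have "a (\<Sum>j\<in>S. c j *\<^sub>R x j) (\<Sum>j\<in>S. c j *\<^sub>R x j) = (\<Sum>j\<in>S. c j * a (x j) (\<Sum>l\<in>S. c l *\<^sub>R x l))"
    by (rule a_sum_left[OF assms xs])
  also have "\<dots> = (\<Sum>j\<in>S. c j * (\<Sum>l\<in>S. c l * a (x l) (x j)))"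
    using gs_sym[OF assms(2) xs] a_sum_left[OF assms assms(2)] by simp
  also have "\<dots> = (\<Sum>j\<in>S. \<Sum>l\<in>S. c j * c l * a (x j) (x l))"
    by (simp add: sum_distrib_left mult.assoc gs_sym assms(2))
  finally show ?thesis .
qed

end

lemma cont_int: fixes f :: "real \<Rightarrow> real" shows "continuous_on {a..b} f \<Longrightarrow> f integrable_on {a..b}"
  by (rule integrable_continuous_interval)

lemma zero_of_int0:
  fixes g :: "real \<Rightarrow> real"
  assumes ab: "a < b" and c: "continuous_on {a..b} g" and z: "integral {a..b} (\<lambda>s. (g s)^2) = 0"
    and s: "s \<in> {a..b}"
  shows "g s = 0"
proof -
  have c2: "continuous_on (cbox a b) (\<lambda>s. (g s)^2)" using c by (auto intro!: continuous_intros)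
  have "((\<lambda>s. (g s)^2) has_integral 0) (cbox a b)"
    using z cont_int[OF c2[unfolded cbox_interval]] by (metis cbox_interval has_integral_integrable_integral)
  note hi = this
  have "(\<lambda>s. (g s)^2) s = 0"
    by (rule has_integral_0_cbox_imp_0[OF c2 _ hi]) (use ab s in auto)
  thus ?thesis by simp
qed

lemma poly_zero_moments:
  fixes a b :: real
  assumes ab: "a < b"
    and m: "\<And>m. m \<le> q \<Longrightarrow> integral {a..b} (\<lambda>s. s^m * (\<Sum>j\<le>q. \<delta> j * s^j)) = 0"
  shows "\<forall>j\<le>q. \<delta> j = (0::real)"
proof -
  define D where "D s = (\<Sum>j\<le>q. \<delta> j * s^j)" for s :: real
  have cD: "continuous_on {a..b} D" unfolding D_def by (intro continuous_intros)
  have "integral {a..b} (\<lambda>s. (D s)^2) = integral {a..b} (\<lambda>s. \<Sum>m\<le>q. \<delta> m * (s^m * D s))"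
    by (simp add: power2_eq_square D_def[of s for s] sum_distrib_right sum_distrib_left mult_ac)
  also have "\<dots> = (\<Sum>m\<le>q. integral {a..b} (\<lambda>s. \<delta> m * (s^m * D s)))"
    by (rule integral_sum) (auto intro!: cont_int continuous_intros cD)
  also have "\<dots> = (\<Sum>m\<le>q. \<delta> m * integral {a..b} (\<lambda>s. s^m * D s))"
    by (simp add: integral_mult_right)
  also have "\<dots> = 0" using m unfolding D_def by simp
  finally have z: "integral {a..b} (\<lambda>s. (D s)^2) = 0" .
  have "{a..b} \<subseteq> {x. (\<Sum>i\<le>q. \<delta> i * x^i) = 0}"
    using zero_of_int0[OF ab cD z] unfolding D_def by auto
  hence "infinite {x. (\<Sum>i\<le>q. \<delta> i * x^i) = 0}" using infinite_Icc[OF ab] finite_subset by blast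
  thus ?thesis using polyfun_finite_roots[of \<delta> q] by auto
qed

lemma proj_exists:
  fixes a b :: real and h :: "real \<Rightarrow> real"
  assumes ab: "a < b"
  shows "continuous_on {a..b} h \<Longrightarrow> \<exists>\<beta>. \<forall>l<n. integral {a..b} (\<lambda>s. (h s - (\<Sum>j<n. \<beta> j * s^j)) * s^l) = 0"
proof (induction n arbitrary: h)
  case 0 thus ?case by simp
next
  case (Suc n)
  obtain \<beta> where \<beta>: "\<forall>l<n. integral {a..b} (\<lambda>s. (h s - (\<Sum>j<n. \<beta> j * s^j)) * s^l) = 0"
    using Suc.IH[OF Suc.prems] by blast
  have "continuous_on {a..b} (\<lambda>s::real. s^n)" by (intro continuous_intros)
  then obtain \<gamma> where \<gamma>: "\<forall>l<n. integral {a..b} (\<lambda>s. (s^n - (\<Sum>j<n. \<gamma> j * s^j)) * s^l) = 0"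
    using Suc.IH by blast
  define H where "H s = h s - (\<Sum>j<n. \<beta> j * s^j)" for s
  define G where "G s = s^n - (\<Sum>j<n. \<gamma> j * s^j)" for s :: real
  have cH: "continuous_on {a..b} H" unfolding H_def using Suc.prems by (intro continuous_intros)
  have cG: "continuous_on {a..b} G" unfolding G_def by (intro continuous_intros)
  define c where "c = (if integral {a..b} (\<lambda>s. (G s)^2) = 0 then 0
                       else integral {a..b} (\<lambda>s. H s * G s) / integral {a..b} (\<lambda>s. (G s)^2))"
  define \<beta>' where "\<beta>' j = (if j < n then \<beta> j - c * \<gamma> j else c)" for j
  have eq: "h s - (\<Sum>j<Suc n. \<beta>' j * s^j) = H s - c * G s" for s
  proof -
    have "(\<Sum>j<Suc n. \<beta>' j * s^j) = (\<Sum>j<n. (\<beta> j - c * \<gamma> j) * s^j) + c * s^n"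
      by (simp add: \<beta>'_def)
    also have "\<dots> = (\<Sum>j<n. \<beta> j * s^j) - c * (\<Sum>j<n. \<gamma> j * s^j) + c * s^n"
      by (simp add: algebra_simps sum_subtractf sum_distrib_left)
    finally show ?thesis unfolding H_def G_def by (simp add: algebra_simps)
  qed
  have ortho: "integral {a..b} (\<lambda>s. (H s - c * G s) * s^l) = 0" if l: "l < n" for l
  proof -
    have "integral {a..b} (\<lambda>s. (H s - c * G s) * s^l)
        = integral {a..b} (\<lambda>s. H s * s^l) - c * integral {a..b} (\<lambda>s. G s * s^l)"
      by (simp add: algebra_simps integral_diff integral_mult_right cont_int continuous_intros cH cG
          flip: integral_mult_right)
    thus ?thesis using \<beta> \<gamma> l unfolding H_def G_def by simp
  qed
  have HGs: "integral {a..b} (\<lambda>s. (H s - c * G s) * s^n)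
      = integral {a..b} (\<lambda>s. (H s - c * G s) * G s)
        + (\<Sum>j<n. \<gamma> j * integral {a..b} (\<lambda>s. (H s - c * G s) * s^j))"
  proof -
    have "integral {a..b} (\<lambda>s. (H s - c * G s) * s^n)
       = integral {a..b} (\<lambda>s. (H s - c * G s) * G s + (\<Sum>j<n. \<gamma> j * ((H s - c * G s) * s^j)))"
    proof (rule integral_cong)
      fix s :: real
      have sn: "s^n = G s + (\<Sum>j<n. \<gamma> j * s^j)" by (simp add: G_def)
      show "(H s - c * G s) * s^n = (H s - c * G s) * G s + (\<Sum>j<n. \<gamma> j * ((H s - c * G s) * s^j))"
        by (subst sn) (simp add: distrib_left sum_distrib_left mult_ac)
    qed
    also have "\<dots> = integral {a..b} (\<lambda>s. (H s - c * G s) * G s)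
        + integral {a..b} (\<lambda>s. (\<Sum>j<n. \<gamma> j * ((H s - c * G s) * s^j)))"
      by (rule integral_add) (auto intro!: cont_int continuous_intros cH cG)
    also have "integral {a..b} (\<lambda>s. (\<Sum>j<n. \<gamma> j * ((H s - c * G s) * s^j)))
       = (\<Sum>j<n. integral {a..b} (\<lambda>s. \<gamma> j * ((H s - c * G s) * s^j)))"
      by (rule integral_sum) (auto intro!: cont_int continuous_intros cH cG)
    finally show ?thesis by (simp add: integral_mult_right)
  qed
  have last: "integral {a..b} (\<lambda>s. (H s - c * G s) * s^n) = 0"
  proof (cases "integral {a..b} (\<lambda>s. (G s)^2) = 0")
    case True
    have "integral {a..b} (\<lambda>s. (H s - c * G s) * G s) = integral {a..b} (\<lambda>s. 0)"
      by (rule integral_cong) (use zero_of_int0[OF ab cG True] in simp)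
    thus ?thesis using HGs ortho by simp
  next
    case False
    have "integral {a..b} (\<lambda>s. (H s - c * G s) * G s)
        = integral {a..b} (\<lambda>s. H s * G s) - c * integral {a..b} (\<lambda>s. (G s)^2)"
      by (simp add: algebra_simps power2_eq_square integral_diff cont_int continuous_intros cH cG
          flip: integral_mult_right)
    also have "\<dots> = 0" using False unfolding c_def by simp
    finally show ?thesis using HGs ortho by simp
  qed
  show ?case
  proof (intro exI[of _ \<beta>'] allI impI)
    fix l assume l: "l < Suc n"
    have "integral {a..b} (\<lambda>s. (h s - (\<Sum>j<Suc n. \<beta>' j * s^j)) * s^l)
        = integral {a..b} (\<lambda>s. (H s - c * G s) * s^l)" by (simp only: eq)
    also have "\<dots> = 0" using ortho last l by (cases "l < n") (auto simp: less_Suc_eq)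
    finally show "integral {a..b} (\<lambda>s. (h s - (\<Sum>j<Suc n. \<beta>' j * s^j)) * s^l) = 0" .
  qed
qed

lemma CS_h:
  fixes f g :: "real \<Rightarrow> real"
  assumes ab: "a < b" and cf: "continuous_on {a..b} f" and cg: "continuous_on {a..b} g"
  shows "(integral {a..b} (\<lambda>s. f s * g s))^2 \<le> integral {a..b} (\<lambda>s. (f s)^2) * integral {a..b} (\<lambda>s. (g s)^2)"
proof -
  define A where "A = integral {a..b} (\<lambda>s. (f s)^2)"
  define B where "B = integral {a..b} (\<lambda>s. f s * g s)"
  define C where "C = integral {a..b} (\<lambda>s. (g s)^2)"
  have C0: "C \<ge> 0" unfolding C_def
    by (rule integral_nonneg) (auto intro!: cont_int continuous_intros cg)
  have A0: "A \<ge> 0" unfolding A_def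
    by (rule integral_nonneg) (auto intro!: cont_int continuous_intros cf)
  have quad: "0 \<le> A - 2 * t * B + t^2 * C" for t
  proof -
    have "0 \<le> integral {a..b} (\<lambda>s. (f s - t * g s)^2)"
      by (rule integral_nonneg) (auto intro!: cont_int continuous_intros cf cg)
    also have "integral {a..b} (\<lambda>s. (f s - t * g s)^2)
       = integral {a..b} (\<lambda>s. (f s)^2 - (2 * t) * (f s * g s) + t^2 * (g s)^2)"
      by (rule integral_cong) (simp add: power2_eq_square algebra_simps)
    also have "\<dots> = A - 2 * t * B + t^2 * C" unfolding A_def B_def C_def
      by (simp add: integral_add integral_diff cont_int continuous_intros cf cg)
    finally show ?thesis .
  qed
  have "B^2 \<le> A * C"
  proof (cases "C = 0")
    case True
    have "B = integral {a..b} (\<lambda>s. 0)" unfolding B_def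
      by (rule integral_cong) (use zero_of_int0[OF ab cg True[unfolded C_def]] in simp)
    thus ?thesis using A0 True by simp
  next
    case False
    hence Cp: "C > 0" using C0 by simp
    have "0 \<le> A - 2 * (B / C) * B + (B / C)^2 * C" by (rule quad)
    hence "0 \<le> A - B^2 / C" using Cp by (simp add: power2_eq_square field_simps)
    hence "B^2 / C \<le> A" by simp
    thus ?thesis using Cp by (simp add: divide_le_eq mult.commute)
  qed
  thus ?thesis unfolding A_def B_def C_def .
qed

lemma poly_deriv:
  "((\<lambda>s. \<Sum>j\<le>n. e j * s^j) has_real_derivative (\<Sum>j\<le>n. e j * (real j * s^(j-1)))) (at s)"
  by (auto intro!: derivative_eq_intros simp: mult_ac)

lemma key_scalar:
  fixes a b :: real and e \<beta> :: "nat \<Rightarrow> real"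
  assumes ab: "a < b"
    and orth: "\<forall>l<Suc q. integral {a..b} (\<lambda>s. (s^Suc q - (\<Sum>j<Suc q. \<beta> j * s^j)) * s^l) = 0"
  shows "(e (Suc q))^2 * integral {a..b} (\<lambda>s. (s^Suc q - (\<Sum>j<Suc q. \<beta> j * s^j))^2)
      \<le> (b - a)^2 * integral {a..b} (\<lambda>s. (\<Sum>j\<le>Suc q. e j * (real j * s^(j-1)))^2)"
proof -
  define n where "n = Suc q"
  define p where "p s = s^n - (\<Sum>j<n. \<beta> j * s^j)" for s :: real
  define \<phi> where "\<phi> s = (\<Sum>j\<le>n. e j * s^j)" for s :: real
  define \<phi>' where "\<phi>' s = (\<Sum>j\<le>n. e j * (real j * s^(j-1)))" for s :: real
  define E where "E = e n"
  have cp: "continuous_on S p" for S unfolding p_def by (intro continuous_intros)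
  have c\<phi>: "continuous_on S \<phi>" for S unfolding \<phi>_def by (intro continuous_intros)
  have c\<phi>': "continuous_on S \<phi>'" for S unfolding \<phi>'_def by (intro continuous_intros)
  have orth': "integral {a..b} (\<lambda>s. p s * s^l) = 0" if "l < n" for l
    using orth that unfolding p_def n_def by blast
  define \<gamma> where "\<gamma> j = e j + E * \<beta> j - (if j = 0 then \<phi> a else 0)" for j
  have dec: "\<phi> s - \<phi> a = E * p s + (\<Sum>j<n. \<gamma> j * s^j)" for s
  proof -
    have "\<phi> s = (\<Sum>j<n. e j * s^j) + E * s^n"
      unfolding \<phi>_def E_def n_def by (simp add: lessThan_Suc_atMost)
    moreover have "(\<Sum>j<n. (if j = 0 then \<phi> a else 0) * s^j) = \<phi> a"
    proof -
      have "(\<Sum>j<n. (if j = 0 then \<phi> a else 0) * s^j) = (\<Sum>j<n. if j = 0 then \<phi> a else 0)"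
        by (rule sum.cong) auto
      also have "\<dots> = \<phi> a" by (simp add: n_def)
      finally show ?thesis .
    qed
    moreover have "(\<Sum>j<n. \<gamma> j * s^j) = (\<Sum>j<n. e j * s^j) + E * (\<Sum>j<n. \<beta> j * s^j)
                     - (\<Sum>j<n. (if j = 0 then \<phi> a else 0) * s^j)"
      unfolding \<gamma>_def by (simp add: algebra_simps sum.distrib sum_subtractf sum_distrib_left)
    ultimately show ?thesis unfolding p_def by (simp add: algebra_simps)
  qed
  have step1: "integral {a..b} (\<lambda>s. p s * (\<phi> s - \<phi> a)) = E * integral {a..b} (\<lambda>s. (p s)^2)"
  proof -
    have "integral {a..b} (\<lambda>s. p s * (\<phi> s - \<phi> a))
        = integral {a..b} (\<lambda>s. E * (p s)^2 + (\<Sum>j<n. \<gamma> j * (p s * s^j)))"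
      by (rule integral_cong) (simp add: dec power2_eq_square algebra_simps sum_distrib_left)
    also have "\<dots> = E * integral {a..b} (\<lambda>s. (p s)^2) + (\<Sum>j<n. \<gamma> j * integral {a..b} (\<lambda>s. p s * s^j))"
      by (simp add: integral_add integral_sum cont_int continuous_intros cp integrable_sum
            flip: integral_mult_right)
    also have "(\<Sum>j<n. \<gamma> j * integral {a..b} (\<lambda>s. p s * s^j)) = 0"
      using orth' by simp
    finally show ?thesis by simp
  qed
  define P2 where "P2 = integral {a..b} (\<lambda>s. (p s)^2)"
  define Q where "Q = integral {a..b} (\<lambda>s. (\<phi> s - \<phi> a)^2)"
  define K where "K = integral {a..b} (\<lambda>s. (\<phi>' s)^2)"
  have P20: "P2 \<ge> 0" unfolding P2_def
    by (rule integral_nonneg) (auto intro!: cont_int continuous_intros cp)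
  have K0: "K \<ge> 0" unfolding K_def
    by (rule integral_nonneg) (auto intro!: cont_int continuous_intros c\<phi>')
  have step2: "E^2 * P2 \<le> Q"
  proof -
    have cc: "continuous_on {a..b} (\<lambda>s. \<phi> s - \<phi> a)" by (intro continuous_intros c\<phi>)
    have "(E * P2)^2 \<le> P2 * Q" unfolding P2_def Q_def
      using CS_h[OF ab cp cc] step1 by simp
    hence "P2 * (E^2 * P2) \<le> P2 * Q" by (simp add: power2_eq_square mult_ac)
    moreover have "Q \<ge> 0" unfolding Q_def
      by (rule integral_nonneg) (auto intro!: cont_int continuous_intros c\<phi>)
    ultimately show ?thesis using P20
      by (cases "P2 = 0") (auto simp: mult_le_cancel_left)
  qed
  have pt: "(\<phi> s - \<phi> a)^2 \<le> (b - a) * K" if s: "s \<in> {a..b}" for s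
  proof (cases "s = a")
    case True thus ?thesis using K0 ab by simp
  next
    case False
    hence as: "a < s" using s by simp
    have "(\<phi>' has_integral (\<phi> s - \<phi> a)) {a..s}"
    proof (rule fundamental_theorem_of_calculus)
      show "a \<le> s" using as by simp
      fix x assume "x \<in> {a..s}"
      show "(\<phi> has_vector_derivative \<phi>' x) (at x within {a..s})"
        unfolding \<phi>_def \<phi>'_def
        using poly_deriv[where n=n and e=e and s=x] by (simp add: has_real_derivative_iff_has_vector_derivative has_vector_derivative_at_within)
    qed
    hence "integral {a..s} \<phi>' = \<phi> s - \<phi> a" by (rule integral_unique)
    hence "(\<phi> s - \<phi> a)^2 = (integral {a..s} (\<lambda>x. 1 * \<phi>' x))^2" by simp
    also have "\<dots> \<le> integral {a..s} (\<lambda>x. 1^2) * integral {a..s} (\<lambda>x. (\<phi>' x)^2)"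
      by (rule CS_h[OF as]) (auto intro!: continuous_intros c\<phi>')
    also have "\<dots> = (s - a) * integral {a..s} (\<lambda>x. (\<phi>' x)^2)" using as by simp
    also have "\<dots> \<le> (b - a) * K"
    proof (rule mult_mono)
      show "s - a \<le> b - a" using s by simp
      show "integral {a..s} (\<lambda>x. (\<phi>' x)^2) \<le> K" unfolding K_def
        by (rule integral_subset_le) (use s in \<open>auto intro!: cont_int continuous_intros c\<phi>'\<close>)
      show "0 \<le> b - a" using ab by simp
      show "0 \<le> integral {a..s} (\<lambda>x. (\<phi>' x)^2)"
        by (rule integral_nonneg) (auto intro!: cont_int continuous_intros c\<phi>')
    qed
    finally show ?thesis .
  qed
  have "Q \<le> integral {a..b} (\<lambda>s. (b - a) * K)" unfolding Q_def
    by (rule integral_le) (use pt in \<open>auto intro!: cont_int continuous_intros c\<phi>\<close>)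
  also have "\<dots> = (b - a)^2 * K" using ab by (simp add: power2_eq_square)
  finally have "E^2 * P2 \<le> (b - a)^2 * K" using step2 by simp
  thus ?thesis unfolding E_def P2_def K_def p_def \<phi>'_def n_def .
qed

lemma lint_scal:
  fixes g :: "real \<Rightarrow> real" and d :: "'h::{real_inner,banach,second_countable_topology}"
  assumes cg: "continuous_on {a..b} g"
  shows "(LINT s:{a..b}|lborel. g s *\<^sub>R d) = integral {a..b} g *\<^sub>R d"
proof -
  have ig: "set_integrable lborel {a..b} g" by (rule borel_integrable_atLeastAtMost'[OF cg])
  have "(LINT s:{a..b}|lborel. g s *\<^sub>R d) = (\<integral>s. (indicator {a..b} s * g s) *\<^sub>R d \<partial>lborel)"
    unfolding set_lebesgue_integral_def by (simp add: mult.commute)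
  also have "\<dots> = (\<integral>s. indicator {a..b} s * g s \<partial>lborel) *\<^sub>R d"
    using ig unfolding set_integrable_def by (intro integral_scaleR_left) (simp add: mult.commute)
  also have "(\<integral>s. indicator {a..b} s * g s \<partial>lborel) = (LINT s:{a..b}|lborel. g s)"
    unfolding set_lebesgue_integral_def by simp
  also have "\<dots> = integral {a..b} g" by (rule set_borel_integral_eq_integral(2)[OF ig])
  finally show ?thesis .
qed

lemma lint_sum:
  fixes g :: "nat \<Rightarrow> real \<Rightarrow> real" and d :: "nat \<Rightarrow> 'h::{real_inner,banach,second_countable_topology}"
  assumes J: "finite J" and cg: "\<And>j. j \<in> J \<Longrightarrow> continuous_on {a..b} (g j)"
  shows "(LINT s:{a..b}|lborel. (\<Sum>j\<in>J. g j s *\<^sub>R d j)) = (\<Sum>j\<in>J. integral {a..b} (g j) *\<^sub>R d j)"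
proof -
  have i: "integrable lborel (\<lambda>s. indicator {a..b} s *\<^sub>R (g j s *\<^sub>R d j))" if "j \<in> J" for j
  proof -
    have "continuous_on {a..b} (\<lambda>s. g j s *\<^sub>R d j)" using cg[OF that] by (intro continuous_intros)
    thus ?thesis using borel_integrable_atLeastAtMost' unfolding set_integrable_def by blast
  qed
  have "(LINT s:{a..b}|lborel. (\<Sum>j\<in>J. g j s *\<^sub>R d j))
      = (\<integral>s. (\<Sum>j\<in>J. indicator {a..b} s *\<^sub>R (g j s *\<^sub>R d j)) \<partial>lborel)"
    unfolding set_lebesgue_integral_def by (simp add: scaleR_sum_right)
  also have "\<dots> = (\<Sum>j\<in>J. (\<integral>s. indicator {a..b} s *\<^sub>R (g j s *\<^sub>R d j) \<partial>lborel))"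
    by (rule Bochner_Integration.integral_sum) (use i in auto)
  also have "\<dots> = (\<Sum>j\<in>J. (LINT s:{a..b}|lborel. g j s *\<^sub>R d j))"
    unfolding set_lebesgue_integral_def by simp
  also have "\<dots> = (\<Sum>j\<in>J. integral {a..b} (g j) *\<^sub>R d j)"
    by (rule sum.cong) (auto intro: lint_scal cg)
  finally show ?thesis .
qed

lemma poly_proj_char:
  fixes c :: "nat \<Rightarrow> 'h::{real_inner,banach,second_countable_topology}" and X :: "real \<Rightarrow> 'h"
  assumes ab: "a < b"
    and X: "\<And>s. s \<in> {a..b} \<Longrightarrow> X s = (\<Sum>j\<le>Suc q. s^j *\<^sub>R c j)"
    and orth: "\<forall>l<Suc q. integral {a..b} (\<lambda>s. (s^Suc q - (\<Sum>j<Suc q. \<beta> j * s^j)) * s^l) = 0"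
  shows "poly_proj q a b X = (\<lambda>s. \<Sum>j\<le>q. s^j *\<^sub>R (c j + \<beta> j *\<^sub>R c (Suc q)))"
proof -
  define p where "p s = s^Suc q - (\<Sum>j<Suc q. \<beta> j * s^j)" for s :: real
  define d0 where "d0 j = c j + \<beta> j *\<^sub>R c (Suc q)" for j
  define P0 where "P0 = (\<lambda>s::real. \<Sum>j\<le>q. s^j *\<^sub>R d0 j)"
  have cp: "continuous_on S p" for S unfolding p_def by (intro continuous_intros)
  have XP0: "X s - P0 s = p s *\<^sub>R c (Suc q)" if s: "s \<in> {a..b}" for s
  proof -
    have "X s = (\<Sum>j\<le>q. s^j *\<^sub>R c j) + s^Suc q *\<^sub>R c (Suc q)" using X[OF s] by simp
    moreover have "P0 s = (\<Sum>j\<le>q. s^j *\<^sub>R c j) + (\<Sum>j<Suc q. \<beta> j * s^j) *\<^sub>R c (Suc q)"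
      unfolding P0_def d0_def
      by (simp add: scaleR_add_right sum.distrib scaleR_sum_left lessThan_Suc_atMost mult.commute)
    ultimately show ?thesis unfolding p_def by (simp add: scaleR_diff_left)
  qed
  define PR where "PR P \<longleftrightarrow> (\<exists>d::nat \<Rightarrow> 'h. P = (\<lambda>s. \<Sum>j\<le>q. s ^ j *\<^sub>R d j)) \<and>
       (\<forall>m\<le>q. (LINT s:{a..b}|lborel. s ^ m *\<^sub>R (X s - P s)) = 0)" for P
  have mom0: "(LINT s:{a..b}|lborel. s ^ m *\<^sub>R (X s - P0 s)) = 0" if m: "m \<le> q" for m
  proof -
    have "(LINT s:{a..b}|lborel. s ^ m *\<^sub>R (X s - P0 s)) = (LINT s:{a..b}|lborel. (p s * s^m) *\<^sub>R c (Suc q))"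
      by (rule set_lebesgue_integral_cong) (auto simp: XP0 mult.commute)
    also have "\<dots> = integral {a..b} (\<lambda>s. p s * s^m) *\<^sub>R c (Suc q)"
      by (rule lint_scal) (intro continuous_intros cp)
    also have "\<dots> = 0" using orth m unfolding p_def by simp
    finally show ?thesis .
  qed
  have p0: "PR P0" unfolding PR_def P0_def using mom0 unfolding P0_def by blast
  have uniq: "P = P0" if pP: "PR P" for P
  proof -
    obtain d where d: "P = (\<lambda>s. \<Sum>j\<le>q. s ^ j *\<^sub>R d j)"
      and mom: "\<And>m. m \<le> q \<Longrightarrow> (LINT s:{a..b}|lborel. s ^ m *\<^sub>R (X s - P s)) = 0"
      using pP unfolding PR_def by blast
    define D where "D j = d0 j - d j" for j
    define g where "g m j s = (if j = Suc q then s^m * p s else s^m * s^j)" for m j and s :: real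
    define D' where "D' j = (if j = Suc q then c (Suc q) else D j)" for j
    have mD: "(\<Sum>j\<le>q. integral {a..b} (\<lambda>s. s^m * s^j) *\<^sub>R D j) = 0" if m: "m \<le> q" for m
    proof -
      have "(LINT s:{a..b}|lborel. s ^ m *\<^sub>R (X s - P s))
          = (LINT s:{a..b}|lborel. (\<Sum>j\<le>Suc q. g m j s *\<^sub>R D' j))"
      proof (rule set_lebesgue_integral_cong)
        show "{a..b} \<in> sets lborel" by simp
        show "\<forall>s. s \<in> {a..b} \<longrightarrow> s ^ m *\<^sub>R (X s - P s) = (\<Sum>j\<le>Suc q. g m j s *\<^sub>R D' j)"
        proof (intro allI impI)
          fix s :: real assume s: "s \<in> {a..b}"
          have PP: "P0 s - P s = (\<Sum>j\<le>q. s^j *\<^sub>R D j)"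
            unfolding P0_def d D_def by (simp add: scaleR_diff_right sum_subtractf)
          have "X s - P s = (X s - P0 s) + (P0 s - P s)" by simp
          also have "\<dots> = p s *\<^sub>R c (Suc q) + (\<Sum>j\<le>q. s^j *\<^sub>R D j)"
            by (simp only: XP0[OF s] PP)
          finally have "s ^ m *\<^sub>R (X s - P s) = (s^m * p s) *\<^sub>R c (Suc q) + (\<Sum>j\<le>q. (s^m * s^j) *\<^sub>R D j)"
            by (simp add: scaleR_add_right scaleR_sum_right)
          also have "\<dots> = (\<Sum>j\<le>Suc q. g m j s *\<^sub>R D' j)"
            unfolding g_def D'_def by (simp add: add.commute)
          finally show "s ^ m *\<^sub>R (X s - P s) = (\<Sum>j\<le>Suc q. g m j s *\<^sub>R D' j)" .
        qed
      qed
      also have "\<dots> = (\<Sum>j\<le>Suc q. integral {a..b} (g m j) *\<^sub>R D' j)"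
      proof (rule lint_sum)
        fix j assume "j \<in> {..Suc q}"
        show "continuous_on {a..b} (g m j)"
          by (cases "j = Suc q") (auto simp: g_def intro!: continuous_intros cp)
      qed simp
      also have "\<dots> = (\<Sum>j\<le>q. integral {a..b} (\<lambda>s. s^m * s^j) *\<^sub>R D j)"
      proof -
        have g0: "integral {a..b} (g m (Suc q)) = 0"
          using orth m unfolding g_def p_def by (simp add: mult.commute)
        have eqs: "\<And>j. j \<in> {..q} \<Longrightarrow> integral {a..b} (g m j) *\<^sub>R D' j = integral {a..b} (\<lambda>s. s^m * s^j) *\<^sub>R D j"
        proof -
          fix j assume "j \<in> {..q}"
          hence "g m j = (\<lambda>s. s^m * s^j)" "D' j = D j" by (auto simp: g_def D'_def fun_eq_iff)
          thus "integral {a..b} (g m j) *\<^sub>R D' j = integral {a..b} (\<lambda>s. s^m * s^j) *\<^sub>R D j" by simp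
        qed
        have "(\<Sum>j\<le>Suc q. integral {a..b} (g m j) *\<^sub>R D' j)
            = (\<Sum>j\<le>q. integral {a..b} (g m j) *\<^sub>R D' j) + integral {a..b} (g m (Suc q)) *\<^sub>R D' (Suc q)"
          by (rule sum.atMost_Suc)
        also have "\<dots> = (\<Sum>j\<le>q. integral {a..b} (g m j) *\<^sub>R D' j)" using g0 by simp
        also have "\<dots> = (\<Sum>j\<le>q. integral {a..b} (\<lambda>s. s^m * s^j) *\<^sub>R D j)"
          by (rule sum.cong[OF refl eqs])
        finally show ?thesis .
      qed
      finally show ?thesis using mom[OF m] by simp
    qed
    have Dz: "D j = 0" if j: "j \<le> q" for j
    proof -
      have "\<forall>j\<le>q. inner (D j) (D j') = (0::real)" for j'
      proof (rule poly_zero_moments[OF ab])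
        fix m assume m: "m \<le> q"
        have "integral {a..b} (\<lambda>s. s ^ m * (\<Sum>j\<le>q. inner (D j) (D j') * s ^ j))
            = integral {a..b} (\<lambda>s. \<Sum>j\<le>q. inner (D j) (D j') * (s ^ m * s^j))"
          by (simp add: sum_distrib_left mult_ac)
        also have "\<dots> = (\<Sum>j\<le>q. inner (D j) (D j') * integral {a..b} (\<lambda>s. s ^ m * s^j))"
          by (simp add: integral_sum cont_int continuous_intros flip: integral_mult_right)
        also have "\<dots> = inner (\<Sum>j\<le>q. integral {a..b} (\<lambda>s. s^m * s^j) *\<^sub>R D j) (D j')"
          by (simp add: inner_sum_left mult.commute)
        also have "\<dots> = 0" using mD[OF m] by simp
        finally show "integral {a..b} (\<lambda>s. s ^ m * (\<Sum>j\<le>q. inner (D j) (D j') * s ^ j)) = 0" .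
      qed
      hence "inner (D j) (D j) = 0" using j by blast
      thus ?thesis by simp
    qed
    have "d j = d0 j" if "j \<le> q" for j using Dz[OF that] unfolding D_def by simp
    hence "(\<lambda>s::real. \<Sum>j\<le>q. s ^ j *\<^sub>R d j) = P0" unfolding P0_def by (auto intro!: sum.cong)
    thus ?thesis using d by simp
  qed
  have "poly_proj q a b X = P0"
    unfolding poly_proj_def PR_def[symmetric] by (rule the_equality[of PR P0, OF p0 uniq])
  thus ?thesis unfolding P0_def d0_def .
qed

lemma CS_set:
  fixes U W :: "real \<Rightarrow> real"
  assumes mU: "set_borel_measurable lborel A U" and mW: "set_borel_measurable lborel A W"
    and iU: "set_integrable lborel A (\<lambda>x. (U x)^2)" and iW: "set_integrable lborel A (\<lambda>x. (W x)^2)"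
  shows "set_integrable lborel A (\<lambda>x. U x * W x)"
    and "(LINT x:A|lborel. \<bar>U x * W x\<bar>) \<le> sqrt (LINT x:A|lborel. (U x)^2) * sqrt (LINT x:A|lborel. (W x)^2)"
proof -
  have e1: "(\<lambda>x. indicator A x *\<^sub>R (U x)^2) = (\<lambda>x. (indicator A x * U x)^2)"
    by (auto simp: indicator_def fun_eq_iff power2_eq_square)
  have e2: "(\<lambda>x. indicator A x *\<^sub>R (W x)^2) = (\<lambda>x. (indicator A x * W x)^2)"
    by (auto simp: indicator_def fun_eq_iff power2_eq_square)
  have e3: "(\<lambda>x. indicator A x *\<^sub>R (U x * W x)) = (\<lambda>x. (indicator A x * U x) * (indicator A x * W x))"
    by (auto simp: indicator_def fun_eq_iff)
  have e4: "(\<lambda>x. indicator A x *\<^sub>R \<bar>U x * W x\<bar>) = (\<lambda>x. \<bar>(indicator A x * U x) * (indicator A x * W x)\<bar>)"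
    by (auto simp: indicator_def fun_eq_iff)
  have mU': "(\<lambda>x. indicator A x * U x) \<in> borel_measurable lborel" using mU unfolding set_borel_measurable_def by simp
  have mW': "(\<lambda>x. indicator A x * W x) \<in> borel_measurable lborel" using mW unfolding set_borel_measurable_def by simp
  have iU': "integrable lborel (\<lambda>x. (indicator A x * U x)^2)" using iU unfolding set_integrable_def e1 .
  have iW': "integrable lborel (\<lambda>x. (indicator A x * W x)^2)" using iW unfolding set_integrable_def e2 .
  show "set_integrable lborel A (\<lambda>x. U x * W x)"
    unfolding set_integrable_def e3 by (rule CS_real(1)[OF mU' mW' iU' iW'])
  show "(LINT x:A|lborel. \<bar>U x * W x\<bar>) \<le> sqrt (LINT x:A|lborel. (U x)^2) * sqrt (LINT x:A|lborel. (W x)^2)"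
    unfolding set_lebesgue_integral_def e1 e2 e4 by (rule CS_real(2)[OF mU' mW' iU' iW'])
qed

context
  fixes V :: "'h::{real_inner,banach,second_countable_topology} set" and a :: "'h \<Rightarrow> 'h \<Rightarrow> real"
  assumes gs: "gelfand_setup V a"
begin

lemma hm1_zero: "hm1norm V a 0 = 0"
  using hm1_le[OF gs, of 0 0] hm1_nonneg[OF gs, of 0] by simp

lemma h1_zero: "h1norm a 0 = 0"
  unfolding h1norm_def using gs_zero_left[OF gs] subspace_0[OF gs_sub[OF gs]] by simp

lemma f_facts:
  assumes mf: "set_borel_measurable lborel S f" and fV: "AE s in lborel. s \<in> S \<longrightarrow> f s \<in> V"
    and fa: "set_integrable lborel S (\<lambda>s. a (f s) (f s))" and Sm: "S \<in> sets lborel"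
  shows "set_borel_measurable lborel S (\<lambda>s. hm1norm V a (f s))"
    and "set_borel_measurable lborel S (\<lambda>s. h1norm a (f s))"
    and "set_integrable lborel S (\<lambda>s. (hm1norm V a (f s))\<^sup>2)"
    and "set_integrable lborel S (\<lambda>s. (h1norm a (f s))\<^sup>2)"
proof -
  have mF: "(\<lambda>s. indicator S s *\<^sub>R f s) \<in> borel_measurable lborel" using mf unfolding set_borel_measurable_def .
  have e1: "(\<lambda>s. indicator S s *\<^sub>R hm1norm V a (f s)) = (\<lambda>s. hm1norm V a (indicator S s *\<^sub>R f s))"
    by (auto simp: indicator_def fun_eq_iff hm1_zero)
  show m1: "set_borel_measurable lborel S (\<lambda>s. hm1norm V a (f s))"
    unfolding set_borel_measurable_def e1 by (rule borel_measurable_continuous_on[OF hm1_cont[OF gs] mF])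
  have ma: "(\<lambda>s. indicator S s *\<^sub>R a (f s) (f s)) \<in> borel_measurable lborel"
    using fa unfolding set_integrable_def by (rule borel_measurable_integrable)
  have e2: "(\<lambda>s. indicator S s *\<^sub>R h1norm a (f s)) = (\<lambda>s. sqrt (indicator S s *\<^sub>R a (f s) (f s)))"
    by (auto simp: indicator_def fun_eq_iff h1norm_def)
  show m2: "set_borel_measurable lborel S (\<lambda>s. h1norm a (f s))"
    unfolding set_borel_measurable_def e2 by (rule measurable_compose[OF ma borel_measurable_sqrt])
  obtain K where K: "K > 0" "\<And>g. hm1norm V a g \<le> K * norm g" using hm1_le_norm[OF gs] by blast
  obtain C where C: "C > 0" "\<And>v. v \<in> V \<Longrightarrow> (norm v)\<^sup>2 \<le> C * a v v" using gs_C[OF gs] by blast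
  have AEf: "AE s in lborel. indicator S s *\<^sub>R (h1norm a (f s))\<^sup>2 = indicator S s *\<^sub>R a (f s) (f s)"
    using fV by eventually_elim (auto simp: indicator_def h1_sq[OF gs])
  have m2': "(\<lambda>s. indicator S s *\<^sub>R (h1norm a (f s))\<^sup>2) \<in> borel_measurable lborel"
  proof -
    have "(\<lambda>s. indicator S s *\<^sub>R (h1norm a (f s))\<^sup>2) = (\<lambda>s. (indicator S s *\<^sub>R h1norm a (f s))\<^sup>2)"
      by (auto simp: indicator_def fun_eq_iff)
    moreover have "(\<lambda>s. indicator S s *\<^sub>R h1norm a (f s)) \<in> borel_measurable lborel"
      using m2 unfolding set_borel_measurable_def .
    ultimately show ?thesis by simp
  qed
  show i2: "set_integrable lborel S (\<lambda>s. (h1norm a (f s))\<^sup>2)"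
    unfolding set_integrable_def
    by (rule integrable_cong_AE_imp[OF fa[unfolded set_integrable_def] m2']) (use AEf in auto)
  have m1': "(\<lambda>s. indicator S s *\<^sub>R (hm1norm V a (f s))\<^sup>2) \<in> borel_measurable lborel"
  proof -
    have "(\<lambda>s. indicator S s *\<^sub>R (hm1norm V a (f s))\<^sup>2) = (\<lambda>s. (indicator S s *\<^sub>R hm1norm V a (f s))\<^sup>2)"
      by (auto simp: indicator_def fun_eq_iff)
    moreover have "(\<lambda>s. indicator S s *\<^sub>R hm1norm V a (f s)) \<in> borel_measurable lborel"
      using m1 unfolding set_borel_measurable_def .
    ultimately show ?thesis by simp
  qed
  show "set_integrable lborel S (\<lambda>s. (hm1norm V a (f s))\<^sup>2)"
    unfolding set_integrable_def
  proof (rule Bochner_Integration.integrable_bound[OF _ m1'])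
    show "integrable lborel (\<lambda>s. (K^2 * C) *\<^sub>R (indicator S s *\<^sub>R (h1norm a (f s))\<^sup>2))"
      using i2 unfolding set_integrable_def by simp
    show "AE s in lborel. norm (indicator S s *\<^sub>R (hm1norm V a (f s))\<^sup>2)
        \<le> norm ((K^2 * C) *\<^sub>R (indicator S s *\<^sub>R (h1norm a (f s))\<^sup>2))"
      using fV
    proof eventually_elim
      case (elim s)
      show ?case
      proof (cases "s \<in> S")
        case True
        hence fs: "f s \<in> V" using elim by simp
        have "(hm1norm V a (f s))\<^sup>2 \<le> (K * norm (f s))\<^sup>2"
          using K(2)[of "f s"] hm1_nonneg[OF gs, of "f s"] by (simp add: power_mono)
        also have "\<dots> = K^2 * (norm (f s))\<^sup>2" by (simp add: power_mult_distrib)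
        also have "\<dots> \<le> K^2 * (C * a (f s) (f s))" using C(2)[OF fs] by (simp add: mult_left_mono)
        also have "\<dots> = (K^2 * C) * (h1norm a (f s))\<^sup>2" using h1_sq[OF gs fs] by simp
        finally show ?thesis using True K C by (simp add: abs_mult)
      qed simp
    qed
  qed
qed

end

lemma abs_set_le:
  fixes g :: "real \<Rightarrow> real"
  shows "\<bar>LINT s:A|lborel. g s\<bar> \<le> (LINT s:A|lborel. \<bar>g s\<bar>)"
proof -
  have "\<bar>LINT s:A|lborel. g s\<bar> \<le> (\<integral>s. \<bar>indicator A s *\<^sub>R g s\<bar> \<partial>lborel)"
    unfolding set_lebesgue_integral_def by (rule integral_abs_bound)
  also have "\<dots> = (LINT s:A|lborel. \<bar>g s\<bar>)"
    unfolding set_lebesgue_integral_def by (auto intro!: Bochner_Integration.integral_cong simp: indicator_def)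
  finally show ?thesis .
qed

lemma cont_set_integrable:
  fixes g :: "real \<Rightarrow> real"
  assumes "continuous_on UNIV g"
  shows "set_integrable lborel {lo..hi} g" "set_borel_measurable lborel {lo..hi} g"
    "(LINT s:{lo..hi}|lborel. g s) = integral {lo..hi} g"
proof -
  have c: "continuous_on {lo..hi} g" using assms continuous_on_subset by blast
  show i: "set_integrable lborel {lo..hi} g" by (rule borel_integrable_atLeastAtMost'[OF c])
  show "set_borel_measurable lborel {lo..hi} g"
    using i unfolding set_integrable_def set_borel_measurable_def by (rule borel_measurable_integrable)
  show "(LINT s:{lo..hi}|lborel. g s) = integral {lo..hi} g" by (rule set_borel_integral_eq_integral(2)[OF i])
qed

context
  fixes V :: "'h::{real_inner,banach,second_countable_topology} set" and a :: "'h \<Rightarrow> 'h \<Rightarrow> real"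
  assumes gs: "gelfand_setup V a"
begin

lemma key_w:
  fixes lo hi :: real and c :: "nat \<Rightarrow> 'h"
  assumes ab: "lo < hi" and cV: "\<And>j. c j \<in> V"
    and orth: "\<forall>l<Suc q. integral {lo..hi} (\<lambda>s. (s^Suc q - (\<Sum>j<Suc q. \<beta> j * s^j)) * s^l) = 0"
  shows "hm1norm V a (c (Suc q)) * sqrt (integral {lo..hi} (\<lambda>s. (s^Suc q - (\<Sum>j<Suc q. \<beta> j * s^j))^2))
     \<le> (hi - lo) * sqrt (integral {lo..hi} (\<lambda>s. (hm1norm V a (\<Sum>j\<le>Suc q. (real j * s^(j-1)) *\<^sub>R c j))^2))"
proof -
  define P2 where "P2 = integral {lo..hi} (\<lambda>s. (s^Suc q - (\<Sum>j<Suc q. \<beta> j * s^j))^2)"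
  define Xd where "Xd s = (\<Sum>j\<le>Suc q. (real j * s^(j-1)) *\<^sub>R c j)" for s :: real
  define D where "D = integral {lo..hi} (\<lambda>s. (hm1norm V a (Xd s))^2)"
  have cXd: "continuous_on UNIV Xd" unfolding Xd_def by (intro continuous_intros)
  have chd: "continuous_on S (\<lambda>s. (hm1norm V a (Xd s))^2)" for S
  proof -
    have "continuous_on UNIV (\<lambda>s. hm1norm V a (Xd s))"
      using continuous_on_compose[OF cXd continuous_on_subset[OF hm1_cont[OF gs] subset_UNIV]] by (simp add: o_def)
    hence "continuous_on UNIV (\<lambda>s. (hm1norm V a (Xd s))^2)" by (intro continuous_intros)
    thus ?thesis using continuous_on_subset by blast
  qed
  have D0: "D \<ge> 0" unfolding D_def
    by (rule integral_nonneg) (auto intro!: cont_int chd)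
  have P20: "P2 \<ge> 0" unfolding P2_def
    by (rule integral_nonneg) (auto intro!: cont_int continuous_intros)
  have "hm1norm V a (c (Suc q)) * sqrt P2 \<le> (hi - lo) * sqrt D"
  proof (cases "P2 = 0")
    case True thus ?thesis using D0 ab by simp
  next
    case False
    hence P2p: "P2 > 0" using P20 by simp
    define M where "M = (hi - lo) * sqrt D / sqrt P2"
    have M0: "M \<ge> 0" unfolding M_def using ab D0 P20 by simp
    have "hm1norm V a (c (Suc q)) \<le> M"
    proof (rule hm1_le[OF gs M0])
      fix v assume v: "v \<in> V" "v \<noteq> 0"
      have hp: "h1norm a v > 0" using h1_pos[OF gs v] .
      define e where "e j = inner (c j) v" for j
      have ks: "(e (Suc q))^2 * P2 \<le> (hi - lo)^2 * integral {lo..hi} (\<lambda>s. (\<Sum>j\<le>Suc q. e j * (real j * s^(j-1)))^2)"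
        unfolding P2_def by (rule key_scalar[OF ab orth])
      have phi: "(\<Sum>j\<le>Suc q. e j * (real j * s^(j-1))) = inner (Xd s) v" for s
        unfolding Xd_def e_def inner_sum_left inner_scaleR_left by (intro sum.cong refl) (simp add: mult.commute)
      have pt: "(inner (Xd s) v)^2 \<le> (h1norm a v)^2 * (hm1norm V a (Xd s))^2" for s
      proof -
        have "\<bar>inner (Xd s) v\<bar> \<le> hm1norm V a (Xd s) * h1norm a v" by (rule hm1_pair[OF gs v(1)])
        hence "\<bar>inner (Xd s) v\<bar>^2 \<le> (hm1norm V a (Xd s) * h1norm a v)^2"
          by (rule power_mono) simp
        thus ?thesis by (simp add: power_mult_distrib mult.commute)
      qed
      have "integral {lo..hi} (\<lambda>s. (\<Sum>j\<le>Suc q. e j * (real j * s^(j-1)))^2)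
          \<le> integral {lo..hi} (\<lambda>s. (h1norm a v)^2 * (hm1norm V a (Xd s))^2)"
        unfolding phi
        by (rule integral_le) (auto intro!: cont_int continuous_intros chd continuous_on_subset[OF cXd] pt)
      also have "\<dots> = (h1norm a v)^2 * D" unfolding D_def by simp
      finally have le: "integral {lo..hi} (\<lambda>s. (\<Sum>j\<le>Suc q. e j * (real j * s^(j-1)))^2) \<le> (h1norm a v)^2 * D" .
      have "(hi - lo)^2 * integral {lo..hi} (\<lambda>s. (\<Sum>j\<le>Suc q. e j * (real j * s^(j-1)))^2)
          \<le> (hi - lo)^2 * ((h1norm a v)^2 * D)" using le by (rule mult_left_mono) simp
      with ks have "(e (Suc q))^2 * P2 \<le> (hi - lo)^2 * ((h1norm a v)^2 * D)" by (rule order_trans)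
      hence "sqrt ((e (Suc q))^2 * P2) \<le> sqrt ((hi - lo)^2 * ((h1norm a v)^2 * D))"
        by (rule real_sqrt_le_mono)
      hence "\<bar>e (Suc q)\<bar> * sqrt P2 \<le> (hi - lo) * (h1norm a v * sqrt D)"
        using ab hp by (simp add: real_sqrt_mult)
      thus "\<bar>inner (c (Suc q)) v\<bar> / h1norm a v \<le> M" unfolding M_def e_def using hp P2p
        by (simp add: divide_le_eq le_divide_eq field_simps)
    qed
    hence "hm1norm V a (c (Suc q)) * sqrt P2 \<le> M * sqrt P2" using P20 by (simp add: mult_right_mono)
    also have "\<dots> = (hi - lo) * sqrt D" unfolding M_def using P2p by simp
    finally show ?thesis .
  qed
  thus ?thesis unfolding P2_def D_def Xd_def .
qed

end

context
  fixes V :: "'h::{real_inner,banach,second_countable_topology} set" and a :: "'h \<Rightarrow> 'h \<Rightarrow> real"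
  assumes gs: "gelfand_setup V a"
begin

lemma interval_bound:
  fixes lo hi :: real and f X :: "real \<Rightarrow> 'h" and c :: "nat \<Rightarrow> 'h"
  assumes ab: "lo < hi"
    and mf: "set_borel_measurable lborel {lo..hi} f"
    and fV: "AE s in lborel. s \<in> {lo..hi} \<longrightarrow> f s \<in> V"
    and fa: "set_integrable lborel {lo..hi} (\<lambda>s. a (f s) (f s))"
    and cV: "\<And>j. c j \<in> V"
    and X: "\<And>s. s \<in> {lo..hi} \<Longrightarrow> X s = (\<Sum>j\<le>Suc q. s^j *\<^sub>R c j)"
  shows "set_integrable lborel {lo..hi} (\<lambda>s. inner (f s) (X s))"
    and "set_integrable lborel {lo..hi} (\<lambda>s. (hm1norm V a (vector_derivative X (at s)))\<^sup>2)"
    and "set_integrable lborel {lo..hi} (\<lambda>s. (h1norm a (poly_proj q lo hi X s))\<^sup>2)"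
    and "\<bar>LINT s:{lo..hi}|lborel. inner (f s) (X s)\<bar>
      \<le> sqrt (LINT s:{lo..hi}|lborel. (hm1norm V a (f s))\<^sup>2)
          * sqrt (LINT s:{lo..hi}|lborel. (h1norm a (poly_proj q lo hi X s))\<^sup>2)
        + (hi - lo) * (sqrt (LINT s:{lo..hi}|lborel. (h1norm a (f s))\<^sup>2)
          * sqrt (LINT s:{lo..hi}|lborel. (hm1norm V a (vector_derivative X (at s)))\<^sup>2))"
proof -
  have sub: "subspace V" by (rule gs_sub[OF gs])
  have "continuous_on {lo..hi} (\<lambda>s::real. s^Suc q)" by (intro continuous_intros)
  from proj_exists[OF ab this, of "Suc q"] obtain \<beta> where
    orth: "\<forall>l<Suc q. integral {lo..hi} (\<lambda>s. (s^Suc q - (\<Sum>j<Suc q. \<beta> j * s^j)) * s^l) = 0" by blast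
  define d0 where "d0 j = c j + \<beta> j *\<^sub>R c (Suc q)" for j
  define P0 where "P0 s = (\<Sum>j\<le>q. s^j *\<^sub>R d0 j)" for s :: real
  define p where "p s = s^Suc q - (\<Sum>j<Suc q. \<beta> j * s^j)" for s :: real
  define w where "w = c (Suc q)"
  have PP: "poly_proj q lo hi X = P0"
    unfolding P0_def d0_def by (rule poly_proj_char[OF ab X orth])
  have XP: "X s = P0 s + p s *\<^sub>R w" if s: "s \<in> {lo..hi}" for s
  proof -
    have "X s = (\<Sum>j\<le>q. s^j *\<^sub>R c j) + s^Suc q *\<^sub>R c (Suc q)" using X[OF s] by simp
    moreover have "P0 s = (\<Sum>j\<le>q. s^j *\<^sub>R c j) + (\<Sum>j<Suc q. \<beta> j * s^j) *\<^sub>R c (Suc q)"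
      unfolding P0_def d0_def
      by (simp add: scaleR_add_right sum.distrib scaleR_sum_left lessThan_Suc_atMost mult.commute)
    ultimately show ?thesis unfolding p_def w_def by (simp add: scaleR_diff_left)
  qed
  have d0V: "d0 j \<in> V" for j unfolding d0_def using cV sub by (intro subspace_add subspace_scale) auto
  have P0V: "P0 s \<in> V" for s unfolding P0_def using d0V sub by (intro subspace_sum subspace_scale) auto
  have wV: "w \<in> V" unfolding w_def by (rule cV)
  have cP0: "continuous_on UNIV P0" unfolding P0_def by (intro continuous_intros)
  have cp: "continuous_on UNIV p" unfolding p_def by (intro continuous_intros)
  define hP where "hP s = h1norm a (P0 s)" for s
  have hPeq: "hP s = sqrt (\<Sum>j\<le>q. \<Sum>l\<le>q. s^j * s^l * a (d0 j) (d0 l))" for s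
    unfolding hP_def h1norm_def P0_def using a_sum_both[OF gs, of "{..q}" d0 "\<lambda>j. s^j"] d0V by simp
  have chP: "continuous_on UNIV hP" unfolding hPeq by (intro continuous_intros)
  have chP2: "continuous_on UNIV (\<lambda>s. (hP s)\<^sup>2)" using chP by (intro continuous_intros)
  define Xd where "Xd s = (\<Sum>j\<le>Suc q. (real j * s^(j-1)) *\<^sub>R c j)" for s :: real
  have cXd: "continuous_on UNIV Xd" unfolding Xd_def by (intro continuous_intros)
  define hd where "hd s = hm1norm V a (Xd s)" for s
  have chd: "continuous_on UNIV hd" unfolding hd_def
    using continuous_on_compose[OF cXd continuous_on_subset[OF hm1_cont[OF gs] subset_UNIV]] by (simp add: o_def)
  have chd2: "continuous_on UNIV (\<lambda>s. (hd s)\<^sup>2)" using chd by (intro continuous_intros)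
  have VD: "vector_derivative X (at s) = Xd s" if s: "s \<in> {lo<..<hi}" for s
  proof -
    have d: "((\<lambda>s. \<Sum>j\<le>Suc q. s^j *\<^sub>R c j) has_vector_derivative Xd s) (at s)"
      unfolding Xd_def by (auto intro!: derivative_eq_intros simp del: sum.atMost_Suc)
    have "(X has_vector_derivative Xd s) (at s)"
      by (rule has_vector_derivative_transform_within_open[OF d _ s]) (use X in auto)
    thus ?thesis by (rule vector_derivative_at)
  qed
  show "set_integrable lborel {lo..hi} (\<lambda>s. (h1norm a (poly_proj q lo hi X s))\<^sup>2)"
    unfolding PP hP_def[symmetric] by (rule cont_set_integrable(1)[OF chP2])
  have mg2: "(\<lambda>s. indicator {lo..hi} s *\<^sub>R (hd s)\<^sup>2) \<in> borel_measurable lborel"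
    using cont_set_integrable(2)[OF chd2] unfolding set_borel_measurable_def .
  have g1eq: "(\<lambda>s. indicator {lo..hi} s *\<^sub>R (hm1norm V a (vector_derivative X (at s)))\<^sup>2)
    = (\<lambda>s. if s = lo then indicator {lo..hi} lo *\<^sub>R (hm1norm V a (vector_derivative X (at lo)))\<^sup>2
           else if s = hi then indicator {lo..hi} hi *\<^sub>R (hm1norm V a (vector_derivative X (at hi)))\<^sup>2
           else indicator {lo..hi} s *\<^sub>R (hd s)\<^sup>2)"
  proof (rule ext)
    fix s :: real
    show "indicator {lo..hi} s *\<^sub>R (hm1norm V a (vector_derivative X (at s)))\<^sup>2 =
      (if s = lo then indicator {lo..hi} lo *\<^sub>R (hm1norm V a (vector_derivative X (at lo)))\<^sup>2
           else if s = hi then indicator {lo..hi} hi *\<^sub>R (hm1norm V a (vector_derivative X (at hi)))\<^sup>2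
           else indicator {lo..hi} s *\<^sub>R (hd s)\<^sup>2)"
    proof (cases "s = lo \<or> s = hi")
      case False
      show ?thesis
      proof (cases "s \<in> {lo..hi}")
        case True
        hence "s \<in> {lo<..<hi}" using False by auto
        thus ?thesis using False VD[of s] unfolding hd_def by simp
      qed (use False in simp)
    qed auto
  qed
  have mg1: "(\<lambda>s. indicator {lo..hi} s *\<^sub>R (hm1norm V a (vector_derivative X (at s)))\<^sup>2) \<in> borel_measurable lborel"
    unfolding g1eq using mg2 by measurable
  have AEg: "AE s in lborel. indicator {lo..hi} s *\<^sub>R (hd s)\<^sup>2 =
      indicator {lo..hi} s *\<^sub>R (hm1norm V a (vector_derivative X (at s)))\<^sup>2"
    using AE_lborel_singleton[of lo] AE_lborel_singleton[of hi]
  proof eventually_elim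
    case (elim s)
    show ?case
    proof (cases "s \<in> {lo..hi}")
      case True
      hence "s \<in> {lo<..<hi}" using elim by auto
      thus ?thesis using VD[of s] unfolding hd_def by simp
    qed simp
  qed
  show iXd: "set_integrable lborel {lo..hi} (\<lambda>s. (hm1norm V a (vector_derivative X (at s)))\<^sup>2)"
    unfolding set_integrable_def
    by (rule integrable_cong_AE_imp[OF cont_set_integrable(1)[OF chd2, unfolded set_integrable_def] mg1 AEg])
  have LXd: "(LINT s:{lo..hi}|lborel. (hm1norm V a (vector_derivative X (at s)))\<^sup>2) = (LINT s:{lo..hi}|lborel. (hd s)\<^sup>2)"
    unfolding set_lebesgue_integral_def by (rule integral_cong_AE[OF mg1 mg2]) (use AEg in auto)
  have Sm: "{lo..hi} \<in> sets lborel" by simp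
  note ff = f_facts[OF gs mf fV fa Sm]
  define F where "F s = indicator {lo..hi} s *\<^sub>R f s" for s
  have mF: "F \<in> borel_measurable lborel" using mf unfolding set_borel_measurable_def F_def .
  have mid: "(\<lambda>x::real. x) \<in> borel_measurable lborel" by simp
  have mP0: "P0 \<in> borel_measurable lborel" using borel_measurable_continuous_on[OF cP0 mid] by simp
  have mp: "p \<in> borel_measurable lborel" using borel_measurable_continuous_on[OF cp mid] by simp
  define T1 where "T1 s = inner (f s) (P0 s)" for s
  define T2 where "T2 s = p s * inner (f s) w" for s
  have eT1: "(\<lambda>s. indicator {lo..hi} s *\<^sub>R T1 s) = (\<lambda>s. inner (F s) (P0 s))"
    by (auto simp: fun_eq_iff F_def T1_def indicator_def)
  have eT2: "(\<lambda>s. indicator {lo..hi} s *\<^sub>R T2 s) = (\<lambda>s. p s * inner (F s) w)"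
    by (auto simp: fun_eq_iff F_def T2_def indicator_def)
  have mT1: "(\<lambda>s. indicator {lo..hi} s *\<^sub>R T1 s) \<in> borel_measurable lborel"
    unfolding eT1 using mF mP0 by measurable
  have mT2: "(\<lambda>s. indicator {lo..hi} s *\<^sub>R T2 s) \<in> borel_measurable lborel"
    unfolding eT2 using mF mp by measurable
  have mhP: "set_borel_measurable lborel {lo..hi} hP" by (rule cont_set_integrable(2)[OF chP])
  have ihP: "set_integrable lborel {lo..hi} (\<lambda>s. (hP s)\<^sup>2)" by (rule cont_set_integrable(1)[OF chP2])
  have cp2: "continuous_on UNIV (\<lambda>s. (p s)\<^sup>2)" using cp by (intro continuous_intros)
  have mp': "set_borel_measurable lborel {lo..hi} p" by (rule cont_set_integrable(2)[OF cp])
  have ip2: "set_integrable lborel {lo..hi} (\<lambda>s. (p s)\<^sup>2)" by (rule cont_set_integrable(1)[OF cp2])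
  note CS1 = CS_set[OF ff(1) mhP ff(3) ihP]
  note CS2 = CS_set[OF mp' ff(2) ip2 ff(4)]
  have B1: "\<bar>T1 s\<bar> \<le> hm1norm V a (f s) * hP s" for s
    unfolding T1_def hP_def by (rule hm1_pair[OF gs P0V])
  have B2: "\<bar>T2 s\<bar> \<le> hm1norm V a w * \<bar>p s * h1norm a (f s)\<bar>" if fs: "f s \<in> V" for s
  proof -
    have "\<bar>inner w (f s)\<bar> \<le> hm1norm V a w * h1norm a (f s)" by (rule hm1_pair[OF gs fs])
    moreover have "h1norm a (f s) \<ge> 0" unfolding h1norm_def using a_nonneg[OF gs fs] by simp
    ultimately show ?thesis unfolding T2_def
      by (simp add: abs_mult inner_commute mult_left_mono mult.left_commute)
  qed
  have iT1: "set_integrable lborel {lo..hi} T1"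
    unfolding set_integrable_def
  proof (rule Bochner_Integration.integrable_bound[OF _ mT1])
    show "integrable lborel (\<lambda>s. indicator {lo..hi} s *\<^sub>R (hm1norm V a (f s) * hP s))"
      using CS1(1) unfolding set_integrable_def .
    show "AE s in lborel. norm (indicator {lo..hi} s *\<^sub>R T1 s) \<le> norm (indicator {lo..hi} s *\<^sub>R (hm1norm V a (f s) * hP s))"
      using B1 by (auto simp: indicator_def intro: order_trans[OF _ abs_ge_self])
  qed
  have iabs2: "set_integrable lborel {lo..hi} (\<lambda>s. hm1norm V a w * \<bar>p s * h1norm a (f s)\<bar>)"
    using set_integrable_abs[OF CS2(1)] by simp
  have iT2: "set_integrable lborel {lo..hi} T2"
    unfolding set_integrable_def
  proof (rule Bochner_Integration.integrable_bound[OF _ mT2])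
    show "integrable lborel (\<lambda>s. indicator {lo..hi} s *\<^sub>R (hm1norm V a w * \<bar>p s * h1norm a (f s)\<bar>))"
      using iabs2 unfolding set_integrable_def .
    show "AE s in lborel. norm (indicator {lo..hi} s *\<^sub>R T2 s) \<le> norm (indicator {lo..hi} s *\<^sub>R (hm1norm V a w * \<bar>p s * h1norm a (f s)\<bar>))"
      using fV
    proof eventually_elim
      case (elim s)
      show ?case
      proof (cases "s \<in> {lo..hi}")
        case True
        thus ?thesis using B2[of s] elim by simp
      qed simp
    qed
  qed
  have eX: "(\<lambda>s. indicator {lo..hi} s *\<^sub>R inner (f s) (X s)) = (\<lambda>s. indicator {lo..hi} s *\<^sub>R (T1 s + T2 s))"
  proof (rule ext)
    fix s
    show "indicator {lo..hi} s *\<^sub>R inner (f s) (X s) = indicator {lo..hi} s *\<^sub>R (T1 s + T2 s)"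
      by (cases "s \<in> {lo..hi}") (simp_all add: XP T1_def T2_def inner_add_right)
  qed
  show "set_integrable lborel {lo..hi} (\<lambda>s. inner (f s) (X s))"
    unfolding set_integrable_def eX using set_integral_add(1)[OF iT1 iT2] unfolding set_integrable_def .
  have LX: "(LINT s:{lo..hi}|lborel. inner (f s) (X s)) = (LINT s:{lo..hi}|lborel. T1 s) + (LINT s:{lo..hi}|lborel. T2 s)"
    using set_integral_add(2)[OF iT1 iT2] unfolding set_lebesgue_integral_def eX .
  have hw0: "hm1norm V a w \<ge> 0" by (rule hm1_nonneg[OF gs])
  have L1: "\<bar>LINT s:{lo..hi}|lborel. T1 s\<bar> \<le> sqrt (LINT s:{lo..hi}|lborel. (hm1norm V a (f s))\<^sup>2) * sqrt (LINT s:{lo..hi}|lborel. (hP s)\<^sup>2)"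
  proof -
    have "\<bar>LINT s:{lo..hi}|lborel. T1 s\<bar> \<le> (LINT s:{lo..hi}|lborel. \<bar>T1 s\<bar>)" by (rule abs_set_le)
    also have "\<dots> \<le> (LINT s:{lo..hi}|lborel. \<bar>hm1norm V a (f s) * hP s\<bar>)"
      by (rule set_integral_mono[OF set_integrable_abs[OF iT1] set_integrable_abs[OF CS1(1)]])
         (use B1 in \<open>auto intro: order_trans[OF _ abs_ge_self]\<close>)
    also have "\<dots> \<le> sqrt (LINT s:{lo..hi}|lborel. (hm1norm V a (f s))\<^sup>2) * sqrt (LINT s:{lo..hi}|lborel. (hP s)\<^sup>2)"
      by (rule CS1(2))
    finally show ?thesis .
  qed
  have L2: "\<bar>LINT s:{lo..hi}|lborel. T2 s\<bar> \<le> hm1norm V a w * (sqrt (LINT s:{lo..hi}|lborel. (p s)\<^sup>2) * sqrt (LINT s:{lo..hi}|lborel. (h1norm a (f s))\<^sup>2))"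
  proof -
    have "\<bar>LINT s:{lo..hi}|lborel. T2 s\<bar> \<le> (LINT s:{lo..hi}|lborel. \<bar>T2 s\<bar>)" by (rule abs_set_le)
    also have "\<dots> \<le> (LINT s:{lo..hi}|lborel. hm1norm V a w * \<bar>p s * h1norm a (f s)\<bar>)"
    proof (rule set_integral_mono_AE[OF set_integrable_abs[OF iT2] iabs2])
      show "AE s\<in>{lo..hi} in lborel. \<bar>T2 s\<bar> \<le> hm1norm V a w * \<bar>p s * h1norm a (f s)\<bar>"
        using fV by eventually_elim (auto intro: B2)
    qed
    also have "\<dots> = hm1norm V a w * (LINT s:{lo..hi}|lborel. \<bar>p s * h1norm a (f s)\<bar>)" by simp
    also have "\<dots> \<le> hm1norm V a w * (sqrt (LINT s:{lo..hi}|lborel. (p s)\<^sup>2) * sqrt (LINT s:{lo..hi}|lborel. (h1norm a (f s))\<^sup>2))"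
      by (rule mult_left_mono[OF CS2(2) hw0])
    finally show ?thesis .
  qed
  have KW: "hm1norm V a w * sqrt (LINT s:{lo..hi}|lborel. (p s)\<^sup>2) \<le> (hi - lo) * sqrt (LINT s:{lo..hi}|lborel. (hd s)\<^sup>2)"
  proof -
    have "hm1norm V a w * sqrt (integral {lo..hi} (\<lambda>s. (p s)\<^sup>2)) \<le> (hi - lo) * sqrt (integral {lo..hi} (\<lambda>s. (hd s)\<^sup>2))"
      using key_w[OF gs ab cV orth] unfolding p_def hd_def Xd_def w_def .
    thus ?thesis using cont_set_integrable(3)[OF cp2] cont_set_integrable(3)[OF chd2] by simp
  qed
  have F10: "sqrt (LINT s:{lo..hi}|lborel. (h1norm a (f s))\<^sup>2) \<ge> 0"
    by (simp add: set_lebesgue_integral_def)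
  have "\<bar>LINT s:{lo..hi}|lborel. inner (f s) (X s)\<bar>
      \<le> \<bar>LINT s:{lo..hi}|lborel. T1 s\<bar> + \<bar>LINT s:{lo..hi}|lborel. T2 s\<bar>" unfolding LX by (rule abs_triangle_ineq)
  also have "\<dots> \<le> sqrt (LINT s:{lo..hi}|lborel. (hm1norm V a (f s))\<^sup>2) * sqrt (LINT s:{lo..hi}|lborel. (hP s)\<^sup>2)
      + (hm1norm V a w * sqrt (LINT s:{lo..hi}|lborel. (p s)\<^sup>2)) * sqrt (LINT s:{lo..hi}|lborel. (h1norm a (f s))\<^sup>2)"
    using L1 L2 by (simp add: mult.assoc)
  also have "\<dots> \<le> sqrt (LINT s:{lo..hi}|lborel. (hm1norm V a (f s))\<^sup>2) * sqrt (LINT s:{lo..hi}|lborel. (hP s)\<^sup>2)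
      + ((hi - lo) * sqrt (LINT s:{lo..hi}|lborel. (hd s)\<^sup>2)) * sqrt (LINT s:{lo..hi}|lborel. (h1norm a (f s))\<^sup>2)"
    using mult_right_mono[OF KW F10] by simp
  finally show "\<bar>LINT s:{lo..hi}|lborel. inner (f s) (X s)\<bar>
      \<le> sqrt (LINT s:{lo..hi}|lborel. (hm1norm V a (f s))\<^sup>2)
          * sqrt (LINT s:{lo..hi}|lborel. (h1norm a (poly_proj q lo hi X s))\<^sup>2)
        + (hi - lo) * (sqrt (LINT s:{lo..hi}|lborel. (h1norm a (f s))\<^sup>2)
          * sqrt (LINT s:{lo..hi}|lborel. (hm1norm V a (vector_derivative X (at s)))\<^sup>2))"
    unfolding PP LXd hP_def[symmetric] by (simp add: mult_ac)
qed

end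

lemma CS3:
  fixes x1 x2 x3 y1 y2 y3 :: real
  shows "x1 * y1 + x2 * y2 + x3 * y3 \<le> sqrt (x1^2 + x2^2 + x3^2) * sqrt (y1^2 + y2^2 + y3^2)"
proof -
  have "(x1 * y1 + x2 * y2 + x3 * y3)^2 + ((x1*y2 - x2*y1)^2 + (x1*y3 - x3*y1)^2 + (x2*y3 - x3*y2)^2)
      = (x1^2 + x2^2 + x3^2) * (y1^2 + y2^2 + y3^2)"
    by (simp add: power2_eq_square algebra_simps)
  moreover have "0 \<le> (x1*y2 - x2*y1)^2 + (x1*y3 - x3*y1)^2 + (x2*y3 - x3*y2)^2" by simp
  ultimately have "(x1 * y1 + x2 * y2 + x3 * y3)^2 \<le> (x1^2 + x2^2 + x3^2) * (y1^2 + y2^2 + y3^2)" by linarith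
  hence "x1 * y1 + x2 * y2 + x3 * y3 \<le> sqrt ((x1^2 + x2^2 + x3^2) * (y1^2 + y2^2 + y3^2))"
    by (rule real_le_rsqrt)
  thus ?thesis by (simp add: real_sqrt_mult)
qed

lemma disc_CS:
  fixes A B C D :: "nat \<Rightarrow> real"
  shows "(\<Sum>i<N. A i * B i + C i * D i) + E * F
     \<le> sqrt ((\<Sum>i<N. (A i)^2 + (C i)^2) + E^2) * sqrt ((\<Sum>i<N. (B i)^2 + (D i)^2) + F^2)"
proof (induction N arbitrary: E F)
  case 0
  show ?case using abs_ge_self[of "E*F"] by (simp add: abs_mult)
next
  case (Suc N)
  define E' where "E' = sqrt ((A N)^2 + (C N)^2 + E^2)"
  define F' where "F' = sqrt ((B N)^2 + (D N)^2 + F^2)"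
  have "(\<Sum>i<Suc N. A i * B i + C i * D i) + E * F
      = (\<Sum>i<N. A i * B i + C i * D i) + (A N * B N + C N * D N + E * F)" by simp
  also have "\<dots> \<le> (\<Sum>i<N. A i * B i + C i * D i) + E' * F'"
    unfolding E'_def F'_def using CS3 by simp
  also have "\<dots> \<le> sqrt ((\<Sum>i<N. (A i)^2 + (C i)^2) + E'^2) * sqrt ((\<Sum>i<N. (B i)^2 + (D i)^2) + F'^2)"
    by (rule Suc.IH)
  also have "\<dots> = sqrt ((\<Sum>i<Suc N. (A i)^2 + (C i)^2) + E^2) * sqrt ((\<Sum>i<Suc N. (B i)^2 + (D i)^2) + F^2)"
    unfolding E'_def F'_def by (simp add: add.assoc)
  finally show ?case .
qed

lemma singleton_int:
  fixes g :: "real \<Rightarrow> real"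
  shows "set_integrable lborel {x..x} g" "(LINT s:{x..x}|lborel. g s) = 0"
proof -
  have e: "(\<lambda>s. indicator {x..x} s *\<^sub>R g s) = (\<lambda>s. if s = x then g x else 0)"
    by (auto simp: fun_eq_iff indicator_def)
  have m: "(\<lambda>s. indicator {x..x} s *\<^sub>R g s) \<in> borel_measurable lborel" unfolding e by measurable
  have ae: "AE s in lborel. (0::real) = indicator {x..x} s *\<^sub>R g s"
    using AE_lborel_singleton[of x] by eventually_elim (simp add: e)
  show "set_integrable lborel {x..x} g" unfolding set_integrable_def
    by (rule integrable_cong_AE_imp[OF integrable_zero m ae])
  have ae': "AE s in lborel. indicator {x..x} s *\<^sub>R g s = (0::real)" using ae by auto
  have "(LINT s:{x..x}|lborel. g s) = (\<integral>s. 0 \<partial>lborel)" unfolding set_lebesgue_integral_def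
    using integral_cong_AE[where f="\<lambda>s. indicator {x..x} s *\<^sub>R g s" and g="\<lambda>s. 0", OF m _ ae'] by simp
  thus "(LINT s:{x..x}|lborel. g s) = 0" by simp
qed

lemma int_split:
  fixes g :: "real \<Rightarrow> real" and t :: "nat \<Rightarrow> real"
  assumes mono: "\<And>i. i < N \<Longrightarrow> t i \<le> t (Suc i)"
    and ig: "\<And>i. i < N \<Longrightarrow> set_integrable lborel {t i..t (Suc i)} g"
  shows "t 0 \<le> t N \<and> set_integrable lborel {t 0..t N} g \<and>
    (LINT s:{t 0..t N}|lborel. g s) = (\<Sum>i<N. LINT s:{t i..t (Suc i)}|lborel. g s)"
  using assms
proof (induction N)
  case 0 thus ?case using singleton_int[of "t 0" g] by simp
next
  case (Suc N)
  have IH: "t 0 \<le> t N \<and> set_integrable lborel {t 0..t N} g \<and>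
    (LINT s:{t 0..t N}|lborel. g s) = (\<Sum>i<N. LINT s:{t i..t (Suc i)}|lborel. g s)"
    using Suc.IH Suc.prems by auto
  have m: "t N \<le> t (Suc N)" using Suc.prems by simp
  have iN: "set_integrable lborel {t N..t (Suc N)} g" using Suc.prems by simp
  have U: "{t 0..t (Suc N)} = {t 0..t N} \<union> {t N..t (Suc N)}" using IH m by auto
  have ae: "AE x in lborel. \<not> (x \<in> {t 0..t N} \<and> x \<in> {t N..t (Suc N)})"
    using AE_lborel_singleton[of "t N"] by eventually_elim auto
  have "(LINT s:{t 0..t (Suc N)}|lborel. g s) = (LINT s:{t 0..t N}|lborel. g s) + (LINT s:{t N..t (Suc N)}|lborel. g s)"
    unfolding U by (rule set_integral_Un_AE[OF ae _ _ conjunct1[OF conjunct2[OF IH]] iN]) auto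
  moreover have "set_integrable lborel {t 0..t (Suc N)} g"
    unfolding U by (rule set_integrable_Un[OF conjunct1[OF conjunct2[OF IH]] iN]) auto
  ultimately show ?case using IH m by simp
qed

theorem lemma5p3:
  fixes V :: "'h::{real_inner,banach,second_countable_topology} set"
    and a :: "'h \<Rightarrow> 'h \<Rightarrow> real"
    and t :: "nat \<Rightarrow> real" and N :: nat and T :: real and q :: nat
    and f :: "real \<Rightarrow> 'h" and u0 :: 'h and X :: "real \<Rightarrow> 'h"
  assumes "gelfand_setup V a"
    and "partition t N T"
    and "set_borel_measurable lborel {0..T} f"
    and "AE s in lborel. s \<in> {0..T} \<longrightarrow> f s \<in> V"
    and "set_integrable lborel {0..T} (\<lambda>s. a (f s) (f s))"
    and "in_Xk V t N q X"
  shows "\<bar>(LINT s:{0..T}|lborel. inner (f s) (X s)) + inner u0 (X 0)\<bar>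
     \<le> sqrt ((\<Sum>i<N. (LINT s:{t i..t (Suc i)}|lborel. (hm1norm V a (f s))\<^sup>2)
               + (t (Suc i) - t i)\<^sup>2 * (LINT s:{t i..t (Suc i)}|lborel. (h1norm a (f s))\<^sup>2))
             + (norm u0)\<^sup>2)
       * sqrt (Xk_norm2 V a t N q X)"
proof -
  note gs = assms(1)
  have t0: "t 0 = 0" "t N = T" and tinc: "\<And>i. i < N \<Longrightarrow> t i < t (Suc i)"
    using assms(2) unfolding partition_def by auto
  obtain c where cV': "\<forall>i<N. \<forall>j. c i j \<in> V"
    and Xc': "\<forall>i<N. \<forall>s\<in>{t i..t (Suc i)}. X s = (\<Sum>j\<le>q+1. s^j *\<^sub>R c i j)"
    using assms(6) unfolding in_Xk_def by blast
  have cV: "\<And>i j. i < N \<Longrightarrow> c i j \<in> V" using cV' by blast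
  have Xc: "X s = (\<Sum>j\<le>Suc q. s^j *\<^sub>R c i j)" if "i < N" "s \<in> {t i..t (Suc i)}" for i s
    using Xc' that by (metis Suc_eq_plus1)
  have monoT: "\<forall>j. i \<le> j \<longrightarrow> j \<le> N \<longrightarrow> t i \<le> t j" for i
  proof
    fix j show "i \<le> j \<longrightarrow> j \<le> N \<longrightarrow> t i \<le> t j"
    proof (induction j)
      case 0 thus ?case by simp
    next
      case (Suc j)
      show ?case
      proof (intro impI)
        assume h: "i \<le> Suc j" "Suc j \<le> N"
        show "t i \<le> t (Suc j)"
        proof (cases "i = Suc j")
          case False
          hence "t i \<le> t j" using Suc.IH h by simp
          also have "t j < t (Suc j)" using tinc h by simp
          finally show ?thesis by simp
        qed simp
      qed
    qed
  qed
  have sub: "{t i..t (Suc i)} \<subseteq> {0..T}" if i: "i < N" for i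
  proof -
    have "t 0 \<le> t i" "t (Suc i) \<le> t N" using monoT[of 0] monoT[of "Suc i"] i by auto
    thus ?thesis using t0 by auto
  qed
  define Fm where "Fm i = (LINT s:{t i..t (Suc i)}|lborel. (hm1norm V a (f s))\<^sup>2)" for i
  define F1 where "F1 i = (LINT s:{t i..t (Suc i)}|lborel. (h1norm a (f s))\<^sup>2)" for i
  define Xp where "Xp i = (LINT s:{t i..t (Suc i)}|lborel. (h1norm a (poly_proj q (t i) (t (Suc i)) X s))\<^sup>2)" for i
  define Xd where "Xd i = (LINT s:{t i..t (Suc i)}|lborel. (hm1norm V a (vector_derivative X (at s)))\<^sup>2)" for i
  define II where "II i = (LINT s:{t i..t (Suc i)}|lborel. inner (f s) (X s))" for i
  have IB: "set_integrable lborel {t i..t (Suc i)} (\<lambda>s. inner (f s) (X s))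
    \<and> set_integrable lborel {t i..t (Suc i)} (\<lambda>s. (hm1norm V a (vector_derivative X (at s)))\<^sup>2)
    \<and> set_integrable lborel {t i..t (Suc i)} (\<lambda>s. (h1norm a (poly_proj q (t i) (t (Suc i)) X s))\<^sup>2)
    \<and> \<bar>II i\<bar> \<le> sqrt (Fm i) * sqrt (Xp i) + (t (Suc i) - t i) * (sqrt (F1 i) * sqrt (Xd i))" if i: "i < N" for i
  proof -
    have mf: "set_borel_measurable lborel {t i..t (Suc i)} f"
      by (rule set_borel_measurable_subset[OF assms(3) _ sub[OF i]]) simp
    have fV: "AE s in lborel. s \<in> {t i..t (Suc i)} \<longrightarrow> f s \<in> V"
      using assms(4) by eventually_elim (use sub[OF i] in auto)
    have fa: "set_integrable lborel {t i..t (Suc i)} (\<lambda>s. a (f s) (f s))"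
      by (rule set_integrable_subset[OF assms(5) _ sub[OF i]]) simp
    note R = interval_bound[OF gs tinc[OF i] mf fV fa cV[OF i] Xc[OF i]]
    show ?thesis using R unfolding Fm_def F1_def Xp_def Xd_def II_def by blast
  qed
  have split: "t 0 \<le> t N \<and> set_integrable lborel {t 0..t N} (\<lambda>s. inner (f s) (X s)) \<and>
    (LINT s:{t 0..t N}|lborel. inner (f s) (X s)) = (\<Sum>i<N. LINT s:{t i..t (Suc i)}|lborel. inner (f s) (X s))"
    by (rule int_split) (use tinc IB in \<open>auto intro: less_imp_le\<close>)
  have LHS: "(LINT s:{0..T}|lborel. inner (f s) (X s)) = (\<Sum>i<N. II i)"
    using split t0 unfolding II_def by simp
  define A where "A i = sqrt (Fm i)" for i
  define B where "B i = sqrt (Xp i)" for i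
  define C where "C i = (t (Suc i) - t i) * sqrt (F1 i)" for i
  define D where "D i = sqrt (Xd i)" for i
  have nn: "Fm i \<ge> 0" "F1 i \<ge> 0" "Xp i \<ge> 0" "Xd i \<ge> 0" for i
    unfolding Fm_def F1_def Xp_def Xd_def by (simp_all add: set_lebesgue_integral_def)
  have "\<bar>(LINT s:{0..T}|lborel. inner (f s) (X s)) + inner u0 (X 0)\<bar> \<le> (\<Sum>i<N. \<bar>II i\<bar>) + \<bar>inner u0 (X 0)\<bar>"
    unfolding LHS by (rule order_trans[OF abs_triangle_ineq add_mono[OF sum_abs order_refl]])
  also have "\<dots> \<le> (\<Sum>i<N. A i * B i + C i * D i) + norm u0 * norm (X 0)"
  proof (rule add_mono)
    show "(\<Sum>i<N. \<bar>II i\<bar>) \<le> (\<Sum>i<N. A i * B i + C i * D i)"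
    proof (rule sum_mono)
      fix i assume "i \<in> {..<N}"
      hence "\<bar>II i\<bar> \<le> sqrt (Fm i) * sqrt (Xp i) + (t (Suc i) - t i) * (sqrt (F1 i) * sqrt (Xd i))"
        using IB by blast
      thus "\<bar>II i\<bar> \<le> A i * B i + C i * D i" unfolding A_def B_def C_def D_def by (simp add: mult.assoc)
    qed
    show "\<bar>inner u0 (X 0)\<bar> \<le> norm u0 * norm (X 0)" by (rule Cauchy_Schwarz_ineq2)
  qed
  also have "\<dots> \<le> sqrt ((\<Sum>i<N. (A i)^2 + (C i)^2) + (norm u0)^2) * sqrt ((\<Sum>i<N. (B i)^2 + (D i)^2) + (norm (X 0))^2)"
    by (rule disc_CS)
  also have "(\<Sum>i<N. (A i)^2 + (C i)^2) = (\<Sum>i<N. Fm i + (t (Suc i) - t i)\<^sup>2 * F1 i)"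
    unfolding A_def C_def using nn by (simp add: power_mult_distrib)
  also have "(\<Sum>i<N. (B i)^2 + (D i)^2) + (norm (X 0))^2 = Xk_norm2 V a t N q X"
  proof -
    have "(\<Sum>i<N. (B i)^2 + (D i)^2) = (\<Sum>i<N. LINT s:{t i..t (Suc i)}|lborel.
        (hm1norm V a (vector_derivative X (at s)))\<^sup>2 + (h1norm a (poly_proj q (t i) (t (Suc i)) X s))\<^sup>2)"
    proof (rule sum.cong[OF refl])
      fix i assume "i \<in> {..<N}"
      hence i: "i < N" by simp
      have "(LINT s:{t i..t (Suc i)}|lborel.
        (hm1norm V a (vector_derivative X (at s)))\<^sup>2 + (h1norm a (poly_proj q (t i) (t (Suc i)) X s))\<^sup>2) = Xd i + Xp i"
        unfolding Xd_def Xp_def using IB[OF i] by (intro set_integral_add(2)) auto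
      thus "(B i)^2 + (D i)^2 = (LINT s:{t i..t (Suc i)}|lborel.
        (hm1norm V a (vector_derivative X (at s)))\<^sup>2 + (h1norm a (poly_proj q (t i) (t (Suc i)) X s))\<^sup>2)"
        unfolding B_def D_def using nn by simp
    qed
    thus ?thesis unfolding Xk_norm2_def by simp
  qed
  finally show ?thesis unfolding Fm_def F1_def .
qed

end
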